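(* In the setting described in the context, suppose $\mathrm{ev}$ is multiplicative and $\iota$-involutive. Then the following are equivalent: (FM') properties (F) and (M') both hold; (A) every object $W$ of $\mathcal{P}^1$ is a biproduct $W\cong\bigoplus_{i=1}^m\emptyset$ for some $m\in\mathbb{N}_0$.
   Context: Setting. Let $\Bbbk$ be a commutative ring with a ring involution $\iota$. Let $\mathcal{P}$ be a small $\Bbbk$-linear (strict) symmetric monoidal category with monoidal product $\sqcup$ and unit object $\emptyset$, in which every object $W$ has a chosen dual $W^r$, giving the standard identifications $\operatorname{Hom}(W_1,W_2)\cong\operatorname{Hom}(\emptyset,W_2\sqcup W_1^r)\cong\operatorname{Hom}(W_1\sqcup W_2^r,\emptyset)$. (In the paper $\mathcal{P}$ is the category of closed $\mathcal{C}$-labeled webs and prefoams.) Let $\mathrm{tr}_W$ be the categorical trace and $\mathrm{ev}\colon\operatorname{End}_{\mathcal{P}}(\emptyset)\to\Bbbk$ a $\Bbbk$-linear map; multiplicative means $\mathrm{ev}(\mathrm{id}_\emptyset)=1$ and $\mathrm{ev}(\Sigma_1\sqcup\Sigma_2)=\mathrm{ev}(\Sigma_1)\mathrm{ev}(\Sigma_2)$. Let $I_1(W,W')\subseteq\operatorname{Hom}(W,W')$ be the set of $\Sigma$ with $\mathrm{ev}(\mathrm{tr}_W(\Sigma'\circ\Sigma))=0$ for all $\Sigma'\in\operatorname{Hom}(W',W)$ (an ideal) and $\mathcal{P}^1:=\mathcal{P}/I_1$; the pairing $\langle\Sigma',\Sigma\rangle:=\mathrm{ev}(\mathrm{tr}_W(\Sigma'\circ\Sigma))$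 descends to $\mathcal{P}^1$. Reversal structure ($\iota$-involutivity): $\iota$-semilinear maps $(-)^r\colon\operatorname{Hom}(W_1,W_2)\to\operatorname{Hom}(W_2,W_1)$ with $(\Sigma^r)^r=\Sigma$, $(\Sigma_2\circ\Sigma_1)^r=\Sigma_1^r\circ\Sigma_2^r$, $\mathrm{tr}_W(\Sigma^r)=\mathrm{tr}_W(\Sigma)^r$, and $\mathrm{ev}(\Sigma^r)=\iota(\mathrm{ev}(\Sigma))$ for $\Sigma\in\operatorname{End}(\emptyset)$; these descend to $\mathcal{P}^1$. Property (M'): for all $W,W'$ the composition map $\operatorname{Hom}_{\mathcal{P}^1}(\emptyset,W')\otimes\operatorname{Hom}_{\mathcal{P}^1}(W,\emptyset)\to\operatorname{Hom}_{\mathcal{P}^1}(W,W')$ is surjective. Property (F): for all $V,W$ the module $\operatorname{Hom}_{\mathcal{P}^1}(W,V)$ is free of finite rank and $\underline{\Sigma}'\mapsto\langle\underline{\Sigma}'^r,-\rangle$ is a bijection $\operatorname{Hom}_{\mathcal{P}^1}(W,V)\to\operatorname{Hom}_{\mathcal{P}^1}(W,V)^*$. A biproduct $W\cong\bigoplus_{i=1}^m\emptyset$ in $\mathcal{P}^1$ means morphisms $f_i\colon W\to\emptyset$, $g_i\colon\emptyset\to W$ with $f_i\circ g_j=\delta_{ij}\mathrm{id}_\emptyset$ and $\sum_ig_i\circ f_i=\mathrm{id}_W$. *)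

theory Defs
  imports Main
begin

text \<open>
  A small k-linear strict symmetric monoidal category with chosen duals, encoded
  via hom-sets inside a type of morphisms.  cmp g f denotes the composite g after f.
\<close>

record ('o, 'm, 'k) lincat =
  Hom   :: "'o \<Rightarrow> 'o \<Rightarrow> 'm set"
  cmp   :: "'m \<Rightarrow> 'm \<Rightarrow> 'm"
  ide   :: "'o \<Rightarrow> 'm"
  madd  :: "'m \<Rightarrow> 'm \<Rightarrow> 'm"
  msmul :: "'k \<Rightarrow> 'm \<Rightarrow> 'm"
  mzero :: "'o \<Rightarrow> 'o \<Rightarrow> 'm"
  otens :: "'o \<Rightarrow> 'o \<Rightarrow> 'o"
  mtens :: "'m \<Rightarrow> 'm \<Rightarrow> 'm"
  unit  :: "'o"
  braid :: "'o \<Rightarrow> 'o \<Rightarrow> 'm"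
  dual  :: "'o \<Rightarrow> 'o"
  coev  :: "'o \<Rightarrow> 'm"
  evm   :: "'o \<Rightarrow> 'm"
  rev   :: "'m \<Rightarrow> 'm"

definition ring_involution :: "('k::comm_ring_1 \<Rightarrow> 'k) \<Rightarrow> bool" where
  "ring_involution \<iota> \<longleftrightarrow>
     (\<forall>a b. \<iota> (a + b) = \<iota> a + \<iota> b) \<and> (\<forall>a b. \<iota> (a * b) = \<iota> a * \<iota> b) \<and>
     \<iota> 1 = 1 \<and> (\<forall>a. \<iota> (\<iota> a) = a)"

definition linear_cat :: "('o, 'm, 'k::comm_ring_1) lincat \<Rightarrow> bool" where
  "linear_cat C \<longleftrightarrow>
    (\<forall>A B. \<forall>f\<in>Hom C A B. \<forall>g\<in>Hom C A B. madd C f g \<in> Hom C A B) \<and>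
    (\<forall>A B a. \<forall>f\<in>Hom C A B. msmul C a f \<in> Hom C A B) \<and>
    (\<forall>A B. mzero C A B \<in> Hom C A B) \<and>
    (\<forall>A B. \<forall>f\<in>Hom C A B. \<forall>g\<in>Hom C A B. \<forall>h\<in>Hom C A B.
        madd C (madd C f g) h = madd C f (madd C g h)) \<and>
    (\<forall>A B. \<forall>f\<in>Hom C A B. \<forall>g\<in>Hom C A B. madd C f g = madd C g f) \<and>
    (\<forall>A B. \<forall>f\<in>Hom C A B. madd C (mzero C A B) f = f) \<and>
    (\<forall>A B. \<forall>f\<in>Hom C A B. \<exists>g\<in>Hom C A B. madd C f g = mzero C A B) \<and>
    (\<forall>A B a. \<forall>f\<in>Hom C A B. \<forall>g\<in>Hom C A B.
        msmul C a (madd C f g) = madd C (msmul C a f) (msmul C a g)) \<and>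
    (\<forall>A B a b. \<forall>f\<in>Hom C A B. msmul C (a + b) f = madd C (msmul C a f) (msmul C b f)) \<and>
    (\<forall>A B a b. \<forall>f\<in>Hom C A B. msmul C (a * b) f = msmul C a (msmul C b f)) \<and>
    (\<forall>A B. \<forall>f\<in>Hom C A B. msmul C 1 f = f) \<and>
    \<comment> \<open>category structure\<close>
    (\<forall>A B D. \<forall>f\<in>Hom C A B. \<forall>g\<in>Hom C B D. cmp C g f \<in> Hom C A D) \<and>
    (\<forall>A. ide C A \<in> Hom C A A) \<and>
    (\<forall>A B. \<forall>f\<in>Hom C A B. cmp C (ide C B) f = f \<and> cmp C f (ide C A) = f) \<and>
    (\<forall>A B D E. \<forall>f\<in>Hom C A B. \<forall>g\<in>Hom C B D. \<forall>h\<in>Hom C D E.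
        cmp C h (cmp C g f) = cmp C (cmp C h g) f) \<and>
    \<comment> \<open>bilinearity of composition\<close>
    (\<forall>A B D. \<forall>f\<in>Hom C A B. \<forall>g1\<in>Hom C B D. \<forall>g2\<in>Hom C B D.
        cmp C (madd C g1 g2) f = madd C (cmp C g1 f) (cmp C g2 f)) \<and>
    (\<forall>A B D. \<forall>f1\<in>Hom C A B. \<forall>f2\<in>Hom C A B. \<forall>g\<in>Hom C B D.
        cmp C g (madd C f1 f2) = madd C (cmp C g f1) (cmp C g f2)) \<and>
    (\<forall>A B D a. \<forall>f\<in>Hom C A B. \<forall>g\<in>Hom C B D.
        cmp C (msmul C a g) f = msmul C a (cmp C g f) \<and>
        cmp C g (msmul C a f) = msmul C a (cmp C g f))"

definition strict_symmetric_monoidal :: "('o, 'm, 'k::comm_ring_1) lincat \<Rightarrow> bool" where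
  "strict_symmetric_monoidal C \<longleftrightarrow>
    (\<forall>A B D. otens C (otens C A B) D = otens C A (otens C B D)) \<and>
    (\<forall>A. otens C (unit C) A = A \<and> otens C A (unit C) = A) \<and>
    (\<forall>A A' B B'. \<forall>f\<in>Hom C A A'. \<forall>g\<in>Hom C B B'.
        mtens C f g \<in> Hom C (otens C A B) (otens C A' B')) \<and>
    (\<forall>A B. mtens C (ide C A) (ide C B) = ide C (otens C A B)) \<and>
    (\<forall>A A' A'' B B' B''. \<forall>f\<in>Hom C A A'. \<forall>f'\<in>Hom C A' A''.
        \<forall>g\<in>Hom C B B'. \<forall>g'\<in>Hom C B' B''.
        mtens C (cmp C f' f) (cmp C g' g) = cmp C (mtens C f' g') (mtens C f g)) \<and>
    (\<forall>A A' B B' D D'. \<forall>f\<in>Hom C A A'. \<forall>g\<in>Hom C B B'. \<forall>h\<in>Hom C D D'.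
        mtens C (mtens C f g) h = mtens C f (mtens C g h)) \<and>
    (\<forall>A A'. \<forall>f\<in>Hom C A A'. mtens C (ide C (unit C)) f = f \<and> mtens C f (ide C (unit C)) = f) \<and>
    (\<forall>A A' B B'. \<forall>f1\<in>Hom C A A'. \<forall>f2\<in>Hom C A A'. \<forall>g\<in>Hom C B B'.
        mtens C (madd C f1 f2) g = madd C (mtens C f1 g) (mtens C f2 g) \<and>
        mtens C g (madd C f1 f2) = madd C (mtens C g f1) (mtens C g f2)) \<and>
    (\<forall>A A' B B' a. \<forall>f\<in>Hom C A A'. \<forall>g\<in>Hom C B B'.
        mtens C (msmul C a f) g = msmul C a (mtens C f g) \<and>
        mtens C f (msmul C a g) = msmul C a (mtens C f g)) \<and>
    \<comment> \<open>symmetry\<close>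
    (\<forall>A B. braid C A B \<in> Hom C (otens C A B) (otens C B A)) \<and>
    (\<forall>A A' B B'. \<forall>f\<in>Hom C A A'. \<forall>g\<in>Hom C B B'.
        cmp C (mtens C g f) (braid C A B) = cmp C (braid C A' B') (mtens C f g)) \<and>
    (\<forall>A B. cmp C (braid C B A) (braid C A B) = ide C (otens C A B)) \<and>
    (\<forall>A B D. braid C A (otens C B D) =
        cmp C (mtens C (ide C B) (braid C A D)) (mtens C (braid C A B) (ide C D)))"

definition has_duals :: "('o, 'm, 'k::comm_ring_1) lincat \<Rightarrow> bool" where
  "has_duals C \<longleftrightarrow>
    (\<forall>W. coev C W \<in> Hom C (unit C) (otens C W (dual C W))) \<and>
    (\<forall>W. evm C W \<in> Hom C (otens C (dual C W) W) (unit C)) \<and>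
    (\<forall>W. cmp C (mtens C (ide C W) (evm C W)) (mtens C (coev C W) (ide C W)) = ide C W) \<and>
    (\<forall>W. cmp C (mtens C (evm C W) (ide C (dual C W))) (mtens C (ide C (dual C W)) (coev C W))
         = ide C (dual C W))"

definition tr :: "('o, 'm, 'k) lincat \<Rightarrow> 'o \<Rightarrow> 'm \<Rightarrow> 'm" where
  "tr C W f = cmp C (evm C W) (cmp C (braid C W (dual C W))
                  (cmp C (mtens C f (ide C (dual C W))) (coev C W)))"

definition setting :: "('o, 'm, 'k::comm_ring_1) lincat \<Rightarrow> ('m \<Rightarrow> 'k) \<Rightarrow> bool" where
  "setting C ev \<longleftrightarrow> linear_cat C \<and> strict_symmetric_monoidal C \<and> has_duals C \<and>
    (\<forall>f\<in>Hom C (unit C) (unit C). \<forall>g\<in>Hom C (unit C) (unit C). ev (madd C f g) = ev f + ev g) \<and>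
    (\<forall>a. \<forall>f\<in>Hom C (unit C) (unit C). ev (msmul C a f) = a * ev f)"

definition multiplicative :: "('o, 'm, 'k::comm_ring_1) lincat \<Rightarrow> ('m \<Rightarrow> 'k) \<Rightarrow> bool" where
  "multiplicative C ev \<longleftrightarrow> ev (ide C (unit C)) = 1 \<and>
    (\<forall>s1\<in>Hom C (unit C) (unit C). \<forall>s2\<in>Hom C (unit C) (unit C).
        ev (mtens C s1 s2) = ev s1 * ev s2)"

definition iota_involutive ::
  "('o, 'm, 'k::comm_ring_1) lincat \<Rightarrow> ('m \<Rightarrow> 'k) \<Rightarrow> ('k \<Rightarrow> 'k) \<Rightarrow> bool" where
  "iota_involutive C ev \<iota> \<longleftrightarrow>
    (\<forall>A B. \<forall>f\<in>Hom C A B. rev C f \<in> Hom C B A) \<and>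
    (\<forall>A B. \<forall>f\<in>Hom C A B. \<forall>g\<in>Hom C A B. rev C (madd C f g) = madd C (rev C f) (rev C g)) \<and>
    (\<forall>A B a. \<forall>f\<in>Hom C A B. rev C (msmul C a f) = msmul C (\<iota> a) (rev C f)) \<and>
    (\<forall>A B. \<forall>f\<in>Hom C A B. rev C (rev C f) = f) \<and>
    (\<forall>A B D. \<forall>f\<in>Hom C A B. \<forall>g\<in>Hom C B D. rev C (cmp C g f) = cmp C (rev C f) (rev C g)) \<and>
    (\<forall>W. \<forall>f\<in>Hom C W W. tr C W (rev C f) = rev C (tr C W f)) \<and>
    (\<forall>f\<in>Hom C (unit C) (unit C). ev (rev C f) = \<iota> (ev f))"

definition pairing :: "('o, 'm, 'k) lincat \<Rightarrow> ('m \<Rightarrow> 'k) \<Rightarrow> 'o \<Rightarrow> 'm \<Rightarrow> 'm \<Rightarrow> 'k" where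
  "pairing C ev W \<Sigma>' \<Sigma> = ev (tr C W (cmp C \<Sigma>' \<Sigma>))"

definition I1 :: "('o, 'm, 'k::zero) lincat \<Rightarrow> ('m \<Rightarrow> 'k) \<Rightarrow> 'o \<Rightarrow> 'o \<Rightarrow> 'm set" where
  "I1 C ev W W' = {\<Sigma> \<in> Hom C W W'. \<forall>\<Sigma>'\<in>Hom C W' W. pairing C ev W \<Sigma>' \<Sigma> = 0}"

text \<open>Equality of morphisms in P^1 = P/I_1 (of representatives in Hom(W,W')).\<close>
definition eq1 :: "('o, 'm, 'k::comm_ring_1) lincat \<Rightarrow> ('m \<Rightarrow> 'k) \<Rightarrow> 'o \<Rightarrow> 'o \<Rightarrow> 'm \<Rightarrow> 'm \<Rightarrow> bool" where
  "eq1 C ev W W' f g \<longleftrightarrow> madd C f (msmul C (-1) g) \<in> I1 C ev W W'"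

definition msum :: "('o, 'm, 'k) lincat \<Rightarrow> 'o \<Rightarrow> 'o \<Rightarrow> 'm list \<Rightarrow> 'm" where
  "msum C A B fs = foldr (madd C) fs (mzero C A B)"

definition lincomb :: "('o, 'm, 'k) lincat \<Rightarrow> 'o \<Rightarrow> 'o \<Rightarrow> 'k list \<Rightarrow> 'm list \<Rightarrow> 'm" where
  "lincomb C A B cs bs = msum C A B (map2 (msmul C) cs bs)"

definition propM' :: "('o, 'm, 'k::comm_ring_1) lincat \<Rightarrow> ('m \<Rightarrow> 'k) \<Rightarrow> bool" where
  "propM' C ev \<longleftrightarrow> (\<forall>W W'. \<forall>\<Sigma>\<in>Hom C W W'. \<exists>ps :: ('m \<times> 'm) list.
      (\<forall>(a, b)\<in>set ps. a \<in> Hom C (unit C) W' \<and> b \<in> Hom C W (unit C)) \<and>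
      eq1 C ev W W' \<Sigma> (msum C W W' (map (\<lambda>(a, b). cmp C a b) ps)))"

text \<open>Hom_{P^1}(W,V) is a free k-module of finite rank (basis given by representatives).\<close>
definition free_finite_rank1 :: "('o, 'm, 'k::comm_ring_1) lincat \<Rightarrow> ('m \<Rightarrow> 'k) \<Rightarrow> 'o \<Rightarrow> 'o \<Rightarrow> bool" where
  "free_finite_rank1 C ev W V \<longleftrightarrow> (\<exists>bs. set bs \<subseteq> Hom C W V \<and>
     (\<forall>\<Sigma>\<in>Hom C W V. \<exists>cs. length cs = length bs \<and> eq1 C ev W V \<Sigma> (lincomb C W V cs bs)) \<and>
     (\<forall>cs. length cs = length bs \<and> lincomb C W V cs bs \<in> I1 C ev W V \<longrightarrow> (\<forall>c\<in>set cs. c = 0)))"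

text \<open>k-linear functionals on Hom_{P^1}(W,V), i.e. on Hom(W,V) vanishing on I_1(W,V).\<close>
definition dual1 :: "('o, 'm, 'k::comm_ring_1) lincat \<Rightarrow> ('m \<Rightarrow> 'k) \<Rightarrow> 'o \<Rightarrow> 'o \<Rightarrow> ('m \<Rightarrow> 'k) set" where
  "dual1 C ev W V = {\<phi>.
     (\<forall>f\<in>Hom C W V. \<forall>g\<in>Hom C W V. \<phi> (madd C f g) = \<phi> f + \<phi> g) \<and>
     (\<forall>a. \<forall>f\<in>Hom C W V. \<phi> (msmul C a f) = a * \<phi> f) \<and>
     (\<forall>f\<in>I1 C ev W V. \<phi> f = 0)}"

text \<open>The map \<Sigma>' \<mapsto> \<langle>\<Sigma>'^r, -\<rangle> from Hom_{P^1}(W,V) to its dual is a bijection.\<close>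
definition pairing_bij :: "('o, 'm, 'k::comm_ring_1) lincat \<Rightarrow> ('m \<Rightarrow> 'k) \<Rightarrow> 'o \<Rightarrow> 'o \<Rightarrow> bool" where
  "pairing_bij C ev W V \<longleftrightarrow>
     (\<forall>\<Sigma>'\<in>Hom C W V. \<forall>\<Sigma>''\<in>Hom C W V.
        (\<forall>\<Sigma>\<in>Hom C W V. pairing C ev W (rev C \<Sigma>') \<Sigma> = pairing C ev W (rev C \<Sigma>'') \<Sigma>)
        \<longrightarrow> eq1 C ev W V \<Sigma>' \<Sigma>'') \<and>
     (\<forall>\<phi>\<in>dual1 C ev W V. \<exists>\<Sigma>'\<in>Hom C W V. \<forall>\<Sigma>\<in>Hom C W V. \<phi> \<Sigma> = pairing C ev W (rev C \<Sigma>') \<Sigma>)"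

definition propF :: "('o, 'm, 'k::comm_ring_1) lincat \<Rightarrow> ('m \<Rightarrow> 'k) \<Rightarrow> bool" where
  "propF C ev \<longleftrightarrow> (\<forall>V W. free_finite_rank1 C ev W V \<and> pairing_bij C ev W V)"

definition biproduct_of_units1 :: "('o, 'm, 'k::comm_ring_1) lincat \<Rightarrow> ('m \<Rightarrow> 'k) \<Rightarrow> 'o \<Rightarrow> nat \<Rightarrow> bool" where
  "biproduct_of_units1 C ev W m \<longleftrightarrow> (\<exists>fs gs. length fs = m \<and> length gs = m \<and>
     set fs \<subseteq> Hom C W (unit C) \<and> set gs \<subseteq> Hom C (unit C) W \<and>
     (\<forall>i<m. \<forall>j<m. eq1 C ev (unit C) (unit C) (cmp C (fs ! i) (gs ! j))
                     (if i = j then ide C (unit C) else mzero C (unit C) (unit C))) \<and>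
     eq1 C ev W W (msum C W W (map2 (cmp C) gs fs)) (ide C W))"

definition propA :: "('o, 'm, 'k::comm_ring_1) lincat \<Rightarrow> ('m \<Rightarrow> 'k) \<Rightarrow> bool" where
  "propA C ev \<longleftrightarrow> (\<forall>W. \<exists>m. biproduct_of_units1 C ev W m)"

end

theory Submission
  imports Defs
begin

locale P1 =
  fixes C :: "('o, 'm, 'k::comm_ring_1) lincat" and ev :: "'m \<Rightarrow> 'k" and \<iota> :: "'k \<Rightarrow> 'k"
  assumes RI: "ring_involution \<iota>" and ST: "setting C ev" and MU: "multiplicative C ev"
    and II: "iota_involutive C ev \<iota>"
begin

abbreviation "U \<equiv> unit C"
abbreviation "H \<equiv> Hom C"
abbreviation "cp \<equiv> cmp C"
abbreviation "tn \<equiv> mtens C"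
abbreviation "ot \<equiv> otens C"
abbreviation "idm \<equiv> ide C"
abbreviation "D \<equiv> dual C"
abbreviation "co \<equiv> coev C"
abbreviation "ep \<equiv> evm C"
abbreviation "br \<equiv> braid C"
abbreviation "ad \<equiv> madd C"
abbreviation "sm \<equiv> msmul C"
abbreviation "z \<equiv> mzero C"

lemma LC: "linear_cat C" using ST unfolding setting_def by blast
lemma SM: "strict_symmetric_monoidal C" using ST unfolding setting_def by blast
lemma HD: "has_duals C" using ST unfolding setting_def by blast

lemma add_in[intro,simp]: "f \<in> H A B \<Longrightarrow> g \<in> H A B \<Longrightarrow> ad f g \<in> H A B"
  using LC[unfolded linear_cat_def, THEN conjunct1] by blast
lemma sm_in[intro,simp]: "f \<in> H A B \<Longrightarrow> sm a f \<in> H A B"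
  using LC[unfolded linear_cat_def, THEN conjunct2, THEN conjunct1] by blast
lemma z_in[intro,simp]: "z A B \<in> H A B"
  using LC[unfolded linear_cat_def, THEN conjunct2, THEN conjunct2, THEN conjunct1] by blast
lemma add_assoc: "f \<in> H A B \<Longrightarrow> g \<in> H A B \<Longrightarrow> h \<in> H A B \<Longrightarrow> ad (ad f g) h = ad f (ad g h)"
  using LC[unfolded linear_cat_def, THEN conjunct2, THEN conjunct2, THEN conjunct2, THEN conjunct1] by blast
lemma add_comm: "f \<in> H A B \<Longrightarrow> g \<in> H A B \<Longrightarrow> ad f g = ad g f"
  using LC[unfolded linear_cat_def, THEN conjunct2, THEN conjunct2, THEN conjunct2, THEN conjunct2, THEN conjunct1] by blast
lemma add_z: "f \<in> H A B \<Longrightarrow> ad (z A B) f = f"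
  using LC[unfolded linear_cat_def, THEN conjunct2, THEN conjunct2, THEN conjunct2, THEN conjunct2, THEN conjunct2, THEN conjunct1] by blast
lemma add_inv: "f \<in> H A B \<Longrightarrow> \<exists>g\<in>H A B. ad f g = z A B"
  using LC[unfolded linear_cat_def, THEN conjunct2, THEN conjunct2, THEN conjunct2, THEN conjunct2, THEN conjunct2, THEN conjunct2, THEN conjunct1] by blast
lemma sm_add: "f \<in> H A B \<Longrightarrow> g \<in> H A B \<Longrightarrow> sm a (ad f g) = ad (sm a f) (sm a g)"
  using LC[unfolded linear_cat_def, THEN conjunct2, THEN conjunct2, THEN conjunct2, THEN conjunct2, THEN conjunct2, THEN conjunct2, THEN conjunct2, THEN conjunct1] by blast
lemma add_sm: "f \<in> H A B \<Longrightarrow> sm (a + b) f = ad (sm a f) (sm b f)"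
  using LC[unfolded linear_cat_def, THEN conjunct2, THEN conjunct2, THEN conjunct2, THEN conjunct2, THEN conjunct2, THEN conjunct2, THEN conjunct2, THEN conjunct2, THEN conjunct1] by blast
lemma sm_sm: "f \<in> H A B \<Longrightarrow> sm (a * b) f = sm a (sm b f)"
  using LC[unfolded linear_cat_def, THEN conjunct2, THEN conjunct2, THEN conjunct2, THEN conjunct2, THEN conjunct2, THEN conjunct2, THEN conjunct2, THEN conjunct2, THEN conjunct2, THEN conjunct1] by blast
lemma sm_one: "f \<in> H A B \<Longrightarrow> sm 1 f = f"
  using LC[unfolded linear_cat_def, THEN conjunct2, THEN conjunct2, THEN conjunct2, THEN conjunct2, THEN conjunct2, THEN conjunct2, THEN conjunct2, THEN conjunct2, THEN conjunct2, THEN conjunct2, THEN conjunct1] by blast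
lemma cp_in: "f \<in> H A B \<Longrightarrow> g \<in> H B E \<Longrightarrow> cp g f \<in> H A E"
  using LC[unfolded linear_cat_def, THEN conjunct2, THEN conjunct2, THEN conjunct2, THEN conjunct2, THEN conjunct2, THEN conjunct2, THEN conjunct2, THEN conjunct2, THEN conjunct2, THEN conjunct2, THEN conjunct2, THEN conjunct1] by blast
lemma id_in[intro,simp]: "idm A \<in> H A A"
  using LC[unfolded linear_cat_def, THEN conjunct2, THEN conjunct2, THEN conjunct2, THEN conjunct2, THEN conjunct2, THEN conjunct2, THEN conjunct2, THEN conjunct2, THEN conjunct2, THEN conjunct2, THEN conjunct2, THEN conjunct2, THEN conjunct1] by blast
lemma cp_id_l: "f \<in> H A B \<Longrightarrow> cp (idm B) f = f"
  using LC[unfolded linear_cat_def, THEN conjunct2, THEN conjunct2, THEN conjunct2, THEN conjunct2, THEN conjunct2, THEN conjunct2, THEN conjunct2, THEN conjunct2, THEN conjunct2, THEN conjunct2, THEN conjunct2, THEN conjunct2, THEN conjunct2, THEN conjunct1] by blast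
lemma cp_id_r: "f \<in> H A B \<Longrightarrow> cp f (idm A) = f"
  using LC[unfolded linear_cat_def, THEN conjunct2, THEN conjunct2, THEN conjunct2, THEN conjunct2, THEN conjunct2, THEN conjunct2, THEN conjunct2, THEN conjunct2, THEN conjunct2, THEN conjunct2, THEN conjunct2, THEN conjunct2, THEN conjunct2, THEN conjunct1] by blast
lemma cp_assoc: "f \<in> H A B \<Longrightarrow> g \<in> H B E \<Longrightarrow> h \<in> H E F \<Longrightarrow> cp h (cp g f) = cp (cp h g) f"
  using LC[unfolded linear_cat_def, THEN conjunct2, THEN conjunct2, THEN conjunct2, THEN conjunct2, THEN conjunct2, THEN conjunct2, THEN conjunct2, THEN conjunct2, THEN conjunct2, THEN conjunct2, THEN conjunct2, THEN conjunct2, THEN conjunct2, THEN conjunct2, THEN conjunct1] by blast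
lemma cp_add_l: "f \<in> H A B \<Longrightarrow> g1 \<in> H B E \<Longrightarrow> g2 \<in> H B E \<Longrightarrow> cp (ad g1 g2) f = ad (cp g1 f) (cp g2 f)"
  using LC[unfolded linear_cat_def, THEN conjunct2, THEN conjunct2, THEN conjunct2, THEN conjunct2, THEN conjunct2, THEN conjunct2, THEN conjunct2, THEN conjunct2, THEN conjunct2, THEN conjunct2, THEN conjunct2, THEN conjunct2, THEN conjunct2, THEN conjunct2, THEN conjunct2, THEN conjunct1] by blast
lemma cp_add_r: "f1 \<in> H A B \<Longrightarrow> f2 \<in> H A B \<Longrightarrow> g \<in> H B E \<Longrightarrow> cp g (ad f1 f2) = ad (cp g f1) (cp g f2)"
  using LC[unfolded linear_cat_def, THEN conjunct2, THEN conjunct2, THEN conjunct2, THEN conjunct2, THEN conjunct2, THEN conjunct2, THEN conjunct2, THEN conjunct2, THEN conjunct2, THEN conjunct2, THEN conjunct2, THEN conjunct2, THEN conjunct2, THEN conjunct2, THEN conjunct2, THEN conjunct2, THEN conjunct1] by blast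
lemma cp_sm_l: "f \<in> H A B \<Longrightarrow> g \<in> H B E \<Longrightarrow> cp (sm a g) f = sm a (cp g f)"
  using LC[unfolded linear_cat_def, THEN conjunct2, THEN conjunct2, THEN conjunct2, THEN conjunct2, THEN conjunct2, THEN conjunct2, THEN conjunct2, THEN conjunct2, THEN conjunct2, THEN conjunct2, THEN conjunct2, THEN conjunct2, THEN conjunct2, THEN conjunct2, THEN conjunct2, THEN conjunct2, THEN conjunct2] by blast
lemma cp_sm_r: "f \<in> H A B \<Longrightarrow> g \<in> H B E \<Longrightarrow> cp g (sm a f) = sm a (cp g f)"
  using LC[unfolded linear_cat_def, THEN conjunct2, THEN conjunct2, THEN conjunct2, THEN conjunct2, THEN conjunct2, THEN conjunct2, THEN conjunct2, THEN conjunct2, THEN conjunct2, THEN conjunct2, THEN conjunct2, THEN conjunct2, THEN conjunct2, THEN conjunct2, THEN conjunct2, THEN conjunct2, THEN conjunct2] by blast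

lemma ot_assoc[simp]: "ot (ot A B) E = ot A (ot B E)"
  using SM[unfolded strict_symmetric_monoidal_def, THEN conjunct1] by blast
lemma ot_U_l[simp]: "ot U A = A"
  using SM[unfolded strict_symmetric_monoidal_def, THEN conjunct2, THEN conjunct1] by blast
lemma ot_U_r[simp]: "ot A U = A"
  using SM[unfolded strict_symmetric_monoidal_def, THEN conjunct2, THEN conjunct1] by blast
lemma tn_in0: "f \<in> H A A' \<Longrightarrow> g \<in> H B B' \<Longrightarrow> tn f g \<in> H (ot A B) (ot A' B')"
  using SM[unfolded strict_symmetric_monoidal_def, THEN conjunct2, THEN conjunct2, THEN conjunct1] by blast
lemma tn_id[simp]: "tn (idm A) (idm B) = idm (ot A B)"
  using SM[unfolded strict_symmetric_monoidal_def, THEN conjunct2, THEN conjunct2, THEN conjunct2, THEN conjunct1] by blast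
lemma inter: "f \<in> H A A' \<Longrightarrow> f' \<in> H A' A'' \<Longrightarrow> g \<in> H B B' \<Longrightarrow> g' \<in> H B' B'' \<Longrightarrow>
   tn (cp f' f) (cp g' g) = cp (tn f' g') (tn f g)"
  using SM[unfolded strict_symmetric_monoidal_def, THEN conjunct2, THEN conjunct2, THEN conjunct2, THEN conjunct2, THEN conjunct1] by blast
lemma tn_assoc: "f \<in> H A A' \<Longrightarrow> g \<in> H B B' \<Longrightarrow> h \<in> H E E' \<Longrightarrow> tn (tn f g) h = tn f (tn g h)"
  using SM[unfolded strict_symmetric_monoidal_def, THEN conjunct2, THEN conjunct2, THEN conjunct2, THEN conjunct2, THEN conjunct2, THEN conjunct1] by blast
lemma tn_U_l: "f \<in> H A A' \<Longrightarrow> tn (idm U) f = f"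
  using SM[unfolded strict_symmetric_monoidal_def, THEN conjunct2, THEN conjunct2, THEN conjunct2, THEN conjunct2, THEN conjunct2, THEN conjunct2, THEN conjunct1] by blast
lemma tn_U_r: "f \<in> H A A' \<Longrightarrow> tn f (idm U) = f"
  using SM[unfolded strict_symmetric_monoidal_def, THEN conjunct2, THEN conjunct2, THEN conjunct2, THEN conjunct2, THEN conjunct2, THEN conjunct2, THEN conjunct1] by blast
lemma tn_add_l: "f1 \<in> H A A' \<Longrightarrow> f2 \<in> H A A' \<Longrightarrow> g \<in> H B B' \<Longrightarrow> tn (ad f1 f2) g = ad (tn f1 g) (tn f2 g)"
  using SM[unfolded strict_symmetric_monoidal_def, THEN conjunct2, THEN conjunct2, THEN conjunct2, THEN conjunct2, THEN conjunct2, THEN conjunct2, THEN conjunct2, THEN conjunct1] by blast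
lemma tn_sm_l: "f \<in> H A A' \<Longrightarrow> g \<in> H B B' \<Longrightarrow> tn (sm a f) g = sm a (tn f g)"
  using SM[unfolded strict_symmetric_monoidal_def, THEN conjunct2, THEN conjunct2, THEN conjunct2, THEN conjunct2, THEN conjunct2, THEN conjunct2, THEN conjunct2, THEN conjunct2, THEN conjunct1] by blast
lemma br_in: "br A B \<in> H (ot A B) (ot B A)"
  using SM[unfolded strict_symmetric_monoidal_def, THEN conjunct2, THEN conjunct2, THEN conjunct2, THEN conjunct2, THEN conjunct2, THEN conjunct2, THEN conjunct2, THEN conjunct2, THEN conjunct2, THEN conjunct1] by blast
lemma br_nat: "f \<in> H A A' \<Longrightarrow> g \<in> H B B' \<Longrightarrow> cp (tn g f) (br A B) = cp (br A' B') (tn f g)"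
  using SM[unfolded strict_symmetric_monoidal_def, THEN conjunct2, THEN conjunct2, THEN conjunct2, THEN conjunct2, THEN conjunct2, THEN conjunct2, THEN conjunct2, THEN conjunct2, THEN conjunct2, THEN conjunct2, THEN conjunct1] by blast
lemma br_inv: "cp (br B A) (br A B) = idm (ot A B)"
  using SM[unfolded strict_symmetric_monoidal_def, THEN conjunct2, THEN conjunct2, THEN conjunct2, THEN conjunct2, THEN conjunct2, THEN conjunct2, THEN conjunct2, THEN conjunct2, THEN conjunct2, THEN conjunct2, THEN conjunct2, THEN conjunct1] by blast
lemma hex: "br A (ot B E) = cp (tn (idm B) (br A E)) (tn (br A B) (idm E))"
  using SM[unfolded strict_symmetric_monoidal_def, THEN conjunct2, THEN conjunct2, THEN conjunct2, THEN conjunct2, THEN conjunct2, THEN conjunct2, THEN conjunct2, THEN conjunct2, THEN conjunct2, THEN conjunct2, THEN conjunct2, THEN conjunct2] by blast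

lemma co_in: "co A \<in> H U (ot A (D A))"
  using HD[unfolded has_duals_def, THEN conjunct1] by blast
lemma ep_in: "ep A \<in> H (ot (D A) A) U"
  using HD[unfolded has_duals_def, THEN conjunct2, THEN conjunct1] by blast
lemma zig1: "cp (tn (idm A) (ep A)) (tn (co A) (idm A)) = idm A"
  using HD[unfolded has_duals_def, THEN conjunct2, THEN conjunct2, THEN conjunct1] by blast
lemma zig2: "cp (tn (ep A) (idm (D A))) (tn (idm (D A)) (co A)) = idm (D A)"
  using HD[unfolded has_duals_def, THEN conjunct2, THEN conjunct2, THEN conjunct2] by blast

lemma ev_add: "f \<in> H U U \<Longrightarrow> g \<in> H U U \<Longrightarrow> ev (ad f g) = ev f + ev g"
  using ST[unfolded setting_def, THEN conjunct2, THEN conjunct2, THEN conjunct2, THEN conjunct1] by blast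
lemma ev_sm: "f \<in> H U U \<Longrightarrow> ev (sm a f) = a * ev f"
  using ST[unfolded setting_def, THEN conjunct2, THEN conjunct2, THEN conjunct2, THEN conjunct2] by blast
lemma ev_one: "ev (idm U) = 1"
  using MU[unfolded multiplicative_def, THEN conjunct1] by blast
lemma ev_tn: "f \<in> H U U \<Longrightarrow> g \<in> H U U \<Longrightarrow> ev (tn f g) = ev f * ev g"
  using MU[unfolded multiplicative_def, THEN conjunct2] by blast

lemma rev_in: "f \<in> H A B \<Longrightarrow> rev C f \<in> H B A"
  using II[unfolded iota_involutive_def, THEN conjunct1] by blast
lemma rev_add: "f \<in> H A B \<Longrightarrow> g \<in> H A B \<Longrightarrow> rev C (ad f g) = ad (rev C f) (rev C g)"
  using II[unfolded iota_involutive_def, THEN conjunct2, THEN conjunct1] by blast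
lemma rev_sm: "f \<in> H A B \<Longrightarrow> rev C (sm a f) = sm (\<iota> a) (rev C f)"
  using II[unfolded iota_involutive_def, THEN conjunct2, THEN conjunct2, THEN conjunct1] by blast
lemma rev_rev: "f \<in> H A B \<Longrightarrow> rev C (rev C f) = f"
  using II[unfolded iota_involutive_def, THEN conjunct2, THEN conjunct2, THEN conjunct2, THEN conjunct1] by blast
lemma rev_cp: "f \<in> H A B \<Longrightarrow> g \<in> H B E \<Longrightarrow> rev C (cp g f) = cp (rev C f) (rev C g)"
  using II[unfolded iota_involutive_def, THEN conjunct2, THEN conjunct2, THEN conjunct2, THEN conjunct2, THEN conjunct1] by blast
lemma tr_rev: "f \<in> H W W \<Longrightarrow> tr C W (rev C f) = rev C (tr C W f)"
  using II[unfolded iota_involutive_def, THEN conjunct2, THEN conjunct2, THEN conjunct2, THEN conjunct2, THEN conjunct2, THEN conjunct1] by blast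
lemma ev_rev: "f \<in> H U U \<Longrightarrow> ev (rev C f) = \<iota> (ev f)"
  using II[unfolded iota_involutive_def, THEN conjunct2, THEN conjunct2, THEN conjunct2, THEN conjunct2, THEN conjunct2, THEN conjunct2] by blast

lemma iota_inj: "\<iota> a = \<iota> b \<Longrightarrow> a = b"
  using RI unfolding ring_involution_def by metis

lemma tn_in: "f \<in> H A A' \<Longrightarrow> g \<in> H B B' \<Longrightarrow> X = ot A B \<Longrightarrow> Y = ot A' B' \<Longrightarrow> tn f g \<in> H X Y"
  using tn_in0 by simp

end

context P1 begin

lemma cp_id_id[simp]: "cp (idm A) (idm A) = idm A"
  using cp_id_l[OF id_in] .

lemma T1: "f \<in> H A A' \<Longrightarrow> g \<in> H B B' \<Longrightarrow> tn f g = cp (tn f (idm B')) (tn (idm A) g)"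
  using inter[of "idm A" A A f A' g B B' "idm B'" B'] by (simp add: cp_id_l cp_id_r)
lemma T2: "f \<in> H A A' \<Longrightarrow> g \<in> H B B' \<Longrightarrow> tn f g = cp (tn (idm A') g) (tn f (idm B))"
  using inter[of f A A' "idm A'" A' "idm B" B B g B'] by (simp add: cp_id_l cp_id_r)
lemma T3: "f \<in> H A A' \<Longrightarrow> f' \<in> H A' A'' \<Longrightarrow> tn (cp f' f) (idm B) = cp (tn f' (idm B)) (tn f (idm B))"
  using inter[of f A A' f' A'' "idm B" B B "idm B" B] by (simp add: cp_id_l cp_id_r)
lemma T4: "f \<in> H A A' \<Longrightarrow> f' \<in> H A' A'' \<Longrightarrow> tn (idm B) (cp f' f) = cp (tn (idm B) f') (tn (idm B) f)"
  using inter[of "idm B" B B "idm B" B f A A' f' A''] by (simp add: cp_id_l cp_id_r)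

definition mate :: "'o \<Rightarrow> 'o \<Rightarrow> 'm \<Rightarrow> 'm" where
  "mate A B f = cp (tn (ep B) (idm (D A))) (cp (tn (idm (D B)) (tn f (idm (D A)))) (tn (idm (D B)) (co A)))"

lemma mate_in: assumes f: "f \<in> H A B" shows "mate A B f \<in> H (D B) (D A)"
proof -
  have a1: "tn (idm (D B)) (co A) \<in> H (D B) (ot (D B) (ot A (D A)))"
    using tn_in0[OF id_in co_in, of "D B" A] by simp
  have a2: "tn (idm (D B)) (tn f (idm (D A))) \<in> H (ot (D B) (ot A (D A))) (ot (D B) (ot B (D A)))"
    using tn_in0[OF id_in tn_in0[OF f id_in], of "D B" "D A"] by simp
  have a3: "tn (ep B) (idm (D A)) \<in> H (ot (D B) (ot B (D A))) (D A)"
    using tn_in0[OF ep_in id_in, of B "D A"] by simp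
  show ?thesis unfolding mate_def by (rule cp_in[OF cp_in[OF a1 a2] a3])
qed

lemma M1: assumes f: "f \<in> H A B"
  shows "cp (tn f (idm (D A))) (co A) = cp (tn (idm B) (mate A B f)) (co B)"
proof -
  define a1 where "a1 = tn (idm (D B)) (co A)"
  define a2 where "a2 = tn (idm (D B)) (tn f (idm (D A)))"
  define a3 where "a3 = tn (ep B) (idm (D A))"
  have a1: "a1 \<in> H (D B) (ot (D B) (ot A (D A)))"
    using tn_in0[OF id_in co_in, of "D B" A] by (simp add: a1_def)
  have a2: "a2 \<in> H (ot (D B) (ot A (D A))) (ot (D B) (ot B (D A)))"
    using tn_in0[OF id_in tn_in0[OF f id_in], of "D B" "D A"] by (simp add: a2_def)
  have a3: "a3 \<in> H (ot (D B) (ot B (D A))) (D A)"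
    using tn_in0[OF ep_in id_in, of B "D A"] by (simp add: a3_def)
  have fD: "tn f (idm (D A)) \<in> H (ot A (D A)) (ot B (D A))"
    using tn_in0[OF f id_in] by simp
  define X1 where "X1 = tn (idm B) a1"
  define X2 where "X2 = tn (idm B) a2"
  define X3 where "X3 = tn (idm B) a3"
  have X1: "X1 \<in> H (ot B (D B)) (ot B (ot (D B) (ot A (D A))))"
    using tn_in0[OF id_in a1, of B] by (simp add: X1_def)
  have X2: "X2 \<in> H (ot B (ot (D B) (ot A (D A)))) (ot B (ot (D B) (ot B (D A))))"
    using tn_in0[OF id_in a2, of B] by (simp add: X2_def)
  have X3: "X3 \<in> H (ot B (ot (D B) (ot B (D A)))) (ot B (D A))"
    using tn_in0[OF id_in a3, of B] by (simp add: X3_def)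
  have "tn (idm B) (mate A B f) = cp X3 (cp X2 X1)"
    unfolding mate_def a1_def[symmetric] a2_def[symmetric] a3_def[symmetric] X1_def X2_def X3_def
    using T4[OF cp_in[OF a1 a2] a3] T4[OF a1 a2] by simp
  hence R: "cp (tn (idm B) (mate A B f)) (co B) = cp X3 (cp X2 (cp X1 (co B)))"
    using cp_assoc[OF co_in X1 X2] cp_assoc[OF co_in cp_in[OF X1 X2] X3] cp_assoc[OF X1 X2 X3]
    by simp
  define Y1 where "Y1 = tn (co B) (idm (ot A (D A)))"
  have Y1: "Y1 \<in> H (ot A (D A)) (ot B (ot (D B) (ot A (D A))))"
    using tn_in0[OF co_in id_in, of B "ot A (D A)"] by (simp add: Y1_def)
  have X1e: "X1 = tn (idm (ot B (D B))) (co A)"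
    unfolding X1_def a1_def using tn_assoc[OF id_in id_in co_in, of B "D B" A] by simp
  have s1: "cp X1 (co B) = cp Y1 (co A)"
  proof -
    have "tn (co B) (co A) = cp X1 (co B)"
      using T2[OF co_in co_in, of B A] tn_U_r[OF co_in] X1e by simp
    moreover have "tn (co B) (co A) = cp Y1 (co A)"
      using T1[OF co_in co_in, of B A] tn_U_l[OF co_in] Y1_def by simp
    ultimately show ?thesis by simp
  qed
  define Y2 where "Y2 = tn (co B) (idm (ot B (D A)))"
  have Y2: "Y2 \<in> H (ot B (D A)) (ot B (ot (D B) (ot B (D A))))"
    using tn_in0[OF co_in id_in, of B "ot B (D A)"] by (simp add: Y2_def)
  have X2e: "X2 = tn (idm (ot B (D B))) (tn f (idm (D A)))"
    unfolding X2_def a2_def using tn_assoc[OF id_in id_in fD, of B "D B"] by simp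
  have s2: "cp X2 Y1 = cp Y2 (tn f (idm (D A)))"
  proof -
    have "tn (co B) (tn f (idm (D A))) = cp X2 Y1"
      using T2[OF co_in fD, of B] X2e Y1_def by simp
    moreover have "tn (co B) (tn f (idm (D A))) = cp Y2 (tn f (idm (D A)))"
      using T1[OF co_in fD, of B] tn_U_l[OF fD] Y2_def by simp
    ultimately show ?thesis by simp
  qed
  have s3: "cp X3 Y2 = idm (ot B (D A))"
  proof -
    have e1: "X3 = tn (tn (idm B) (ep B)) (idm (D A))"
      unfolding X3_def a3_def using tn_assoc[OF id_in ep_in id_in, of B B "D A"] by simp
    have e2: "Y2 = tn (tn (co B) (idm B)) (idm (D A))"
      unfolding Y2_def using tn_assoc[OF co_in id_in id_in, of B B "D A"] by simp
    have t1: "tn (co B) (idm B) \<in> H B (ot B (ot (D B) B))"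
      using tn_in0[OF co_in id_in, of B B] by simp
    have t2: "tn (idm B) (ep B) \<in> H (ot B (ot (D B) B)) B"
      using tn_in0[OF id_in ep_in, of B B] by simp
    show ?thesis using inter[OF t1 t2 id_in id_in, of "D A"] e1 e2 zig1[of B] cp_id_l[OF id_in]
      by simp
  qed
  have "cp X3 (cp X2 (cp X1 (co B))) = cp X3 (cp (cp X2 Y1) (co A))"
    using s1 cp_assoc[OF co_in Y1 X2] by simp
  also have "\<dots> = cp X3 (cp Y2 (cp (tn f (idm (D A))) (co A)))"
    using s2 cp_assoc[OF co_in fD Y2] by simp
  also have "\<dots> = cp (tn f (idm (D A))) (co A)"
    using cp_assoc[OF cp_in[OF co_in fD] Y2 X3] s3 cp_id_l[OF cp_in[OF co_in fD]] by simp
  finally show ?thesis using R by simp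
qed

lemma M2: assumes f: "f \<in> H A B"
  shows "cp (ep A) (tn (mate A B f) (idm A)) = cp (ep B) (tn (idm (D B)) f)"
proof -
  define a1 where "a1 = tn (idm (D B)) (co A)"
  define a2 where "a2 = tn (idm (D B)) (tn f (idm (D A)))"
  define a3 where "a3 = tn (ep B) (idm (D A))"
  have a1: "a1 \<in> H (D B) (ot (D B) (ot A (D A)))"
    using tn_in0[OF id_in co_in, of "D B" A] by (simp add: a1_def)
  have a2: "a2 \<in> H (ot (D B) (ot A (D A))) (ot (D B) (ot B (D A)))"
    using tn_in0[OF id_in tn_in0[OF f id_in], of "D B" "D A"] by (simp add: a2_def)
  have a3: "a3 \<in> H (ot (D B) (ot B (D A))) (D A)"
    using tn_in0[OF ep_in id_in, of B "D A"] by (simp add: a3_def)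
  have fD: "tn f (idm (D A)) \<in> H (ot A (D A)) (ot B (D A))"
    using tn_in0[OF f id_in] by simp
  define Z1 where "Z1 = tn a1 (idm A)"
  define Z2 where "Z2 = tn a2 (idm A)"
  define Z3 where "Z3 = tn a3 (idm A)"
  have Z1: "Z1 \<in> H (ot (D B) A) (ot (D B) (ot A (ot (D A) A)))"
    using tn_in0[OF a1 id_in, of A] by (simp add: Z1_def)
  have Z2: "Z2 \<in> H (ot (D B) (ot A (ot (D A) A))) (ot (D B) (ot B (ot (D A) A)))"
    using tn_in0[OF a2 id_in, of A] by (simp add: Z2_def)
  have Z3: "Z3 \<in> H (ot (D B) (ot B (ot (D A) A))) (ot (D A) A)"
    using tn_in0[OF a3 id_in, of A] by (simp add: Z3_def)
  have "tn (mate A B f) (idm A) = cp Z3 (cp Z2 Z1)"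
    unfolding mate_def a1_def[symmetric] a2_def[symmetric] a3_def[symmetric] Z1_def Z2_def Z3_def
    using T3[OF cp_in[OF a1 a2] a3] T3[OF a1 a2] by simp
  hence L: "cp (ep A) (tn (mate A B f) (idm A)) = cp (cp (ep A) Z3) (cp Z2 Z1)"
    using cp_assoc[OF cp_in[OF Z1 Z2] Z3 ep_in] by simp
  define W1 where "W1 = tn (idm (ot (D B) B)) (ep A)"
  have W1: "W1 \<in> H (ot (D B) (ot B (ot (D A) A))) (ot (D B) B)"
    using tn_in0[OF id_in ep_in, of "ot (D B) B" A] by (simp add: W1_def)
  have Z3e: "Z3 = tn (ep B) (idm (ot (D A) A))"
    unfolding Z3_def a3_def using tn_assoc[OF ep_in id_in id_in, of B "D A" A] by simp
  have s1: "cp (ep A) Z3 = cp (ep B) W1"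
  proof -
    have "tn (ep B) (ep A) = cp (ep A) Z3"
      using T2[OF ep_in ep_in, of B A] tn_U_l[OF ep_in] Z3e by simp
    moreover have "tn (ep B) (ep A) = cp (ep B) W1"
      using T1[OF ep_in ep_in, of B A] tn_U_r[OF ep_in] W1_def by simp
    ultimately show ?thesis by simp
  qed
  define h where "h = tn (idm (D B)) f"
  have h: "h \<in> H (ot (D B) A) (ot (D B) B)"
    using tn_in0[OF id_in f, of "D B"] by (simp add: h_def)
  define W2 where "W2 = tn (idm (ot (D B) A)) (ep A)"
  have W2: "W2 \<in> H (ot (D B) (ot A (ot (D A) A))) (ot (D B) A)"
    using tn_in0[OF id_in ep_in, of "ot (D B) A" A] by (simp add: W2_def)
  have Z2e: "Z2 = tn h (idm (ot (D A) A))"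
  proof -
    have "Z2 = tn (idm (D B)) (tn (tn f (idm (D A))) (idm A))"
      unfolding Z2_def a2_def using tn_assoc[OF id_in fD id_in, of "D B" A] by simp
    also have "\<dots> = tn (idm (D B)) (tn f (idm (ot (D A) A)))"
      using tn_assoc[OF f id_in id_in, of "D A" A] by simp
    also have "\<dots> = tn h (idm (ot (D A) A))"
      unfolding h_def using tn_assoc[OF id_in f id_in, of "D B" "ot (D A) A"] by simp
    finally show ?thesis .
  qed
  have s2: "cp W1 Z2 = cp h W2"
  proof -
    have "tn h (ep A) = cp W1 Z2"
      using T2[OF h ep_in, of A] Z2e W1_def by simp
    moreover have "tn h (ep A) = cp h W2"
      using T1[OF h ep_in, of A] tn_U_r[OF h] W2_def by simp
    ultimately show ?thesis by simp
  qed
  have s3: "cp W2 Z1 = idm (ot (D B) A)"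
  proof -
    have e1: "W2 = tn (idm (D B)) (tn (idm A) (ep A))"
      unfolding W2_def using tn_assoc[OF id_in id_in ep_in, of "D B" A A] by simp
    have e2: "Z1 = tn (idm (D B)) (tn (co A) (idm A))"
      unfolding Z1_def a1_def using tn_assoc[OF id_in co_in id_in, of "D B" A A] by simp
    have t1: "tn (co A) (idm A) \<in> H A (ot A (ot (D A) A))"
      using tn_in0[OF co_in id_in, of A A] by simp
    have t2: "tn (idm A) (ep A) \<in> H (ot A (ot (D A) A)) A"
      using tn_in0[OF id_in ep_in, of A A] by simp
    show ?thesis using inter[OF id_in id_in t1 t2, of "D B"] e1 e2 zig1[of A] by simp
  qed
  have "cp (cp (ep A) Z3) (cp Z2 Z1) = cp (ep B) (cp (cp W1 Z2) Z1)"
    using s1 cp_assoc[OF Z1 Z2 W1] cp_assoc[OF cp_in[OF Z1 Z2] W1 ep_in] by simp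
  also have "\<dots> = cp (ep B) (cp h (cp W2 Z1))"
    using s2 cp_assoc[OF Z1 W2 h] by simp
  also have "\<dots> = cp (ep B) h" using s3 cp_id_r[OF h] by simp
  finally show ?thesis using L h_def by simp
qed

lemma tr_cyc: assumes f: "f \<in> H A B" and g: "g \<in> H B A"
  shows "tr C A (cp g f) = tr C B (cp f g)"
proof -
  have fs: "mate A B f \<in> H (D B) (D A)" by (rule mate_in[OF f])
  have gD: "tn g (idm (D A)) \<in> H (ot B (D A)) (ot A (D A))" using tn_in0[OF g id_in] by simp
  have fD: "tn f (idm (D A)) \<in> H (ot A (D A)) (ot B (D A))" using tn_in0[OF f id_in] by simp
  have gDB: "tn g (idm (D B)) \<in> H (ot B (D B)) (ot A (D B))" using tn_in0[OF g id_in] by simp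
  have fDB: "tn f (idm (D B)) \<in> H (ot A (D B)) (ot B (D B))" using tn_in0[OF f id_in] by simp
  have Bfs: "tn (idm B) (mate A B f) \<in> H (ot B (D B)) (ot B (D A))" using tn_in0[OF id_in fs] by simp
  have Afs: "tn (idm A) (mate A B f) \<in> H (ot A (D B)) (ot A (D A))" using tn_in0[OF id_in fs] by simp
  have fsA: "tn (mate A B f) (idm A) \<in> H (ot (D B) A) (ot (D A) A)" using tn_in0[OF fs id_in] by simp
  have DBf: "tn (idm (D B)) f \<in> H (ot (D B) A) (ot (D B) B)" using tn_in0[OF id_in f] by simp
  have brA: "br A (D A) \<in> H (ot A (D A)) (ot (D A) A)" by (rule br_in)
  have brAB: "br A (D B) \<in> H (ot A (D B)) (ot (D B) A)" by (rule br_in)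
  have brB: "br B (D B) \<in> H (ot B (D B)) (ot (D B) B)" by (rule br_in)
  have e1: "cp (tn g (idm (D A))) (tn (idm B) (mate A B f)) = cp (tn (idm A) (mate A B f)) (tn g (idm (D B)))"
    using T2[OF g fs] inter[OF id_in g fs id_in] cp_id_l[OF g] cp_id_r[OF g] cp_id_l[OF fs] cp_id_r[OF fs]
    by (metis)
  have "tr C A (cp g f) = cp (ep A) (cp (br A (D A)) (cp (cp (tn g (idm (D A))) (tn f (idm (D A)))) (co A)))"
    unfolding tr_def using T3[OF f g] by simp
  also have "\<dots> = cp (ep A) (cp (br A (D A)) (cp (tn g (idm (D A))) (cp (tn (idm B) (mate A B f)) (co B))))"
    using cp_assoc[OF co_in fD gD] M1[OF f] by simp
  also have "\<dots> = cp (ep A) (cp (br A (D A)) (cp (tn (idm A) (mate A B f)) (cp (tn g (idm (D B))) (co B))))"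
    using cp_assoc[OF co_in Bfs gD] cp_assoc[OF co_in gDB Afs] e1 by simp
  also have "\<dots> = cp (ep A) (cp (tn (mate A B f) (idm A)) (cp (br A (D B)) (cp (tn g (idm (D B))) (co B))))"
    using cp_assoc[OF cp_in[OF co_in gDB] Afs brA] cp_assoc[OF cp_in[OF co_in gDB] brAB fsA]
      br_nat[OF id_in fs, of A] by simp
  also have "\<dots> = cp (ep B) (cp (tn (idm (D B)) f) (cp (br A (D B)) (cp (tn g (idm (D B))) (co B))))"
    using cp_assoc[OF cp_in[OF cp_in[OF co_in gDB] brAB] fsA ep_in]
      cp_assoc[OF cp_in[OF cp_in[OF co_in gDB] brAB] DBf ep_in] M2[OF f] by simp
  also have "\<dots> = cp (ep B) (cp (br B (D B)) (cp (tn f (idm (D B))) (cp (tn g (idm (D B))) (co B))))"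
    using cp_assoc[OF cp_in[OF co_in gDB] brAB DBf] cp_assoc[OF cp_in[OF co_in gDB] fDB brB]
      br_nat[OF f id_in, of "D B"] by simp
  also have "\<dots> = tr C B (cp f g)"
    unfolding tr_def using T3[OF g f] cp_assoc[OF co_in gDB fDB] by simp
  finally show ?thesis .
qed

lemma br_U1: "br A U = idm A"
proof -
  have p: "br A U \<in> H A A" using br_in[of A U] by simp
  have q: "br U A \<in> H A A" using br_in[of U A] by simp
  have pp: "br A U = cp (br A U) (br A U)"
    using hex[of A U U] tn_U_l[OF p] tn_U_r[OF p] by simp
  have qp: "cp (br U A) (br A U) = idm A" using br_inv[of U A] by simp
  have "br A U = cp (cp (br U A) (br A U)) (br A U)" using qp cp_id_l[OF p] by simp
  also have "\<dots> = cp (br U A) (cp (br A U) (br A U))" using cp_assoc[OF p p q] by simp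
  also have "\<dots> = idm A" using pp qp by simp
  finally show ?thesis .
qed

lemma br_U2: "br U A = idm A"
proof -
  have q: "br U A \<in> H A A" using br_in[of U A] by simp
  have qp: "cp (br U A) (br A U) = idm A" using br_inv[of U A] by simp
  thus ?thesis using br_U1 cp_id_r[OF q] by simp
qed

lemma scal_tn1: "s \<in> H U U \<Longrightarrow> t \<in> H U U \<Longrightarrow> tn s t = cp s t"
  using T1[of s U U t U U] tn_U_l tn_U_r by simp
lemma scal_tn2: "s \<in> H U U \<Longrightarrow> t \<in> H U U \<Longrightarrow> tn s t = cp t s"
  using T2[of s U U t U U] tn_U_l tn_U_r by simp
lemma ev_cp: "s \<in> H U U \<Longrightarrow> t \<in> H U U \<Longrightarrow> ev (cp s t) = ev s * ev t"
  using ev_tn scal_tn1 by metis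

lemma tr_U: assumes s: "s \<in> H U U" shows "tr C U s = s"
proof -
  have coU: "co U \<in> H U (D U)" using co_in[of U] by simp
  have epU: "ep U \<in> H (D U) U" using ep_in[of U] by simp
  have sD: "tn s (idm (D U)) \<in> H (D U) (D U)" using tn_in0[OF s id_in, of "D U"] by simp
  have e: "cp (tn s (idm (D U))) (co U) = cp (co U) s"
    using T1[OF s coU] T2[OF s coU] tn_U_l[OF coU] tn_U_r[OF s] by simp
  have z1: "cp (ep U) (co U) = idm U"
    using zig1[of U] tn_U_l[OF epU] tn_U_r[OF coU] by simp
  have "tr C U s = cp (ep U) (cp (co U) s)"
    unfolding tr_def using br_U2[of "D U"] cp_id_l[OF cp_in[OF coU sD]] e by simp
  also have "\<dots> = s" using cp_assoc[OF s coU epU] z1 cp_id_l[OF s] by simp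
  finally show ?thesis .
qed

lemma tr_in: "f \<in> H W W \<Longrightarrow> tr C W f \<in> H U U"
  unfolding tr_def
  using cp_in[OF cp_in[OF cp_in[OF co_in tn_in0[of f W W "idm (D W)" "D W" "D W"]] br_in] ep_in] by simp

lemma K6: "a \<in> H U W \<Longrightarrow> b \<in> H W U \<Longrightarrow> tr C W (cp a b) = cp b a"
  using tr_cyc[of b W U a] tr_U cp_in by metis

lemma sm_zero: assumes f: "f \<in> H A B" shows "sm 0 f = z A B"
proof -
  define x where "x = sm 0 f"
  have x: "x \<in> H A B" using f x_def by simp
  have xx: "ad x x = x" using add_sm[OF f, of 0 0] x_def by simp
  obtain g where g: "g \<in> H A B" "ad x g = z A B" using add_inv[OF x] by blast
  have "z A B = ad (ad x x) g" using xx g by simp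
  also have "\<dots> = ad x (z A B)" using add_assoc[OF x x g(1)] g by simp
  also have "\<dots> = x" using add_comm[OF x z_in] add_z[OF x] by simp
  finally show ?thesis using x_def by simp
qed

lemma add_z_r: "f \<in> H A B \<Longrightarrow> ad f (z A B) = f"
  using add_comm[OF _ z_in] add_z by metis

lemma add_neg: assumes f: "f \<in> H A B" shows "ad f (sm (-1) f) = z A B"
  using add_sm[OF f, of 1 "-1"] sm_one[OF f] sm_zero[OF f] by simp

lemma sm_z: "sm a (z A B) = z A B"
  using sm_sm[OF z_in, of a 0 A B] sm_zero[OF z_in] by simp

lemma cp_z_r: "g \<in> H B E \<Longrightarrow> cp g (z A B) = z A E"
  using cp_sm_r[OF z_in, of g B E 0 A] sm_zero[OF z_in] sm_zero[OF cp_in[OF z_in]] by metis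
lemma cp_z_l: "f \<in> H A B \<Longrightarrow> cp (z B E) f = z A E"
  using cp_sm_l[OF _ z_in, of f A B 0 E] sm_zero[OF z_in] sm_zero[OF cp_in[OF _ z_in]] by metis

lemma ev_z: "ev (z U U) = 0"
  using ev_sm[OF z_in, of 0] sm_zero[OF z_in] by simp

lemma tr_add: "f \<in> H W W \<Longrightarrow> g \<in> H W W \<Longrightarrow> tr C W (ad f g) = ad (tr C W f) (tr C W g)"
proof -
  assume f: "f \<in> H W W" and g: "g \<in> H W W"
  have fD: "tn f (idm (D W)) \<in> H (ot W (D W)) (ot W (D W))" using tn_in0[OF f id_in] by simp
  have gD: "tn g (idm (D W)) \<in> H (ot W (D W)) (ot W (D W))" using tn_in0[OF g id_in] by simp
  have b: "br W (D W) \<in> H (ot W (D W)) (ot (D W) W)" by (rule br_in)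
  show ?thesis unfolding tr_def
    using tn_add_l[OF f g id_in, of "D W"] cp_add_l[OF co_in fD gD]
      cp_add_r[OF cp_in[OF co_in fD] cp_in[OF co_in gD] b]
      cp_add_r[OF cp_in[OF cp_in[OF co_in fD] b] cp_in[OF cp_in[OF co_in gD] b] ep_in] by simp
qed

lemma tr_sm: "f \<in> H W W \<Longrightarrow> tr C W (sm a f) = sm a (tr C W f)"
proof -
  assume f: "f \<in> H W W"
  have fD: "tn f (idm (D W)) \<in> H (ot W (D W)) (ot W (D W))" using tn_in0[OF f id_in] by simp
  have b: "br W (D W) \<in> H (ot W (D W)) (ot (D W) W)" by (rule br_in)
  show ?thesis unfolding tr_def
    using tn_sm_l[OF f id_in, of a "D W"] cp_sm_l[OF co_in fD] cp_sm_r[OF cp_in[OF co_in fD] b]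
      cp_sm_r[OF cp_in[OF cp_in[OF co_in fD] b] ep_in] by simp
qed

definition sb :: "'m \<Rightarrow> 'm \<Rightarrow> 'm" where "sb f g = ad f (sm (-1) g)"

lemma sb_in[simp,intro]: "f \<in> H A B \<Longrightarrow> g \<in> H A B \<Longrightarrow> sb f g \<in> H A B"
  unfolding sb_def by simp

lemma ev_sb: "f \<in> H U U \<Longrightarrow> g \<in> H U U \<Longrightarrow> ev (sb f g) = ev f - ev g"
  unfolding sb_def using ev_add ev_sm by simp

lemma cp_sb_r: "f \<in> H A B \<Longrightarrow> g \<in> H A B \<Longrightarrow> h \<in> H B E \<Longrightarrow> cp h (sb f g) = sb (cp h f) (cp h g)"
  unfolding sb_def using cp_add_r cp_sm_r by simp
lemma cp_sb_l: "f \<in> H A B \<Longrightarrow> g \<in> H B E \<Longrightarrow> h \<in> H B E \<Longrightarrow> cp (sb g h) f = sb (cp g f) (cp h f)"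
  unfolding sb_def using cp_add_l cp_sm_l by simp
lemma tr_sb: "f \<in> H W W \<Longrightarrow> g \<in> H W W \<Longrightarrow> tr C W (sb f g) = sb (tr C W f) (tr C W g)"
  unfolding sb_def using tr_add tr_sm by simp
lemma sb_self: "f \<in> H A B \<Longrightarrow> sb f f = z A B"
  unfolding sb_def using add_neg by simp

abbreviation "II W W' \<equiv> I1 C ev W W'"
abbreviation "eq \<equiv> eq1 C ev"
definition pv :: "'o \<Rightarrow> 'm \<Rightarrow> 'm \<Rightarrow> 'k" where "pv W S f = ev (tr C W (cp S f))"

lemma pv_add: "f \<in> H W W' \<Longrightarrow> g \<in> H W W' \<Longrightarrow> S \<in> H W' W \<Longrightarrow> pv W S (ad f g) = pv W S f + pv W S g"
  unfolding pv_def using cp_add_r[of f W W' g S W] tr_add[OF cp_in[of f W W' S W] cp_in[of g W W' S W]]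
    ev_add[OF tr_in tr_in] cp_in by simp
lemma pv_sm: "f \<in> H W W' \<Longrightarrow> S \<in> H W' W \<Longrightarrow> pv W S (sm a f) = a * pv W S f"
  unfolding pv_def using cp_sm_r[of f W W' S W a] tr_sm[OF cp_in[of f W W' S W]] ev_sm[OF tr_in[OF cp_in[of f W W' S W]]]
   by simp
lemma pv_z: "S \<in> H W' W \<Longrightarrow> pv W S (z W W') = 0"
  unfolding pv_def using cp_z_r[of S W' W W] tr_sm[OF z_in, where a=0 and W=W] sm_zero[OF z_in] sm_zero[OF tr_in[OF z_in]] ev_z
  by simp
lemma pv_sb: "f \<in> H W W' \<Longrightarrow> g \<in> H W W' \<Longrightarrow> S \<in> H W' W \<Longrightarrow> pv W S (sb f g) = pv W S f - pv W S g"
  unfolding sb_def using pv_add pv_sm by simp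
lemma pv_cp_l: "f \<in> H W W' \<Longrightarrow> h \<in> H W' W'' \<Longrightarrow> S \<in> H W'' W \<Longrightarrow> pv W S (cp h f) = pv W (cp S h) f"
  unfolding pv_def using cp_assoc[of f W W' h W'' S W] by simp
lemma pv_cp_r: assumes f: "f \<in> H W W'" and h: "h \<in> H V W" and S: "S \<in> H W' V"
  shows "pv V S (cp f h) = pv W (cp h S) f"
proof -
  have "tr C V (cp S (cp f h)) = tr C V (cp (cp S f) h)" using cp_assoc[OF h f S] by simp
  also have "\<dots> = tr C W (cp h (cp S f))" using tr_cyc[OF h cp_in[OF f S]] by simp
  also have "\<dots> = tr C W (cp (cp h S) f)" using cp_assoc[OF f S h] by simp
  finally show ?thesis unfolding pv_def by simp
qed
lemma pv_U: "s \<in> H U U \<Longrightarrow> S \<in> H U U \<Longrightarrow> pv U S s = ev S * ev s"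
  unfolding pv_def using tr_U[OF cp_in[of s U U S U]] ev_cp[of S s] by simp

lemma I1_iff: "x \<in> II W W' \<longleftrightarrow> x \<in> H W W' \<and> (\<forall>S\<in>H W' W. pv W S x = 0)"
  unfolding I1_def pairing_def pv_def by auto

lemma eq_iff: "f \<in> H W W' \<Longrightarrow> g \<in> H W W' \<Longrightarrow> eq W W' f g \<longleftrightarrow> (\<forall>S\<in>H W' W. pv W S f = pv W S g)"
  unfolding eq1_def sb_def[symmetric] I1_iff using pv_sb by auto

lemma eqI: "f \<in> H W W' \<Longrightarrow> g \<in> H W W' \<Longrightarrow> (\<And>S. S\<in>H W' W \<Longrightarrow> pv W S f = pv W S g) \<Longrightarrow> eq W W' f g"
  using eq_iff by blast
lemma eqD: "eq W W' f g \<Longrightarrow> f \<in> H W W' \<Longrightarrow> g \<in> H W W' \<Longrightarrow> S\<in>H W' W \<Longrightarrow> pv W S f = pv W S g"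
  using eq_iff by blast

lemma eq_refl: "f \<in> H W W' \<Longrightarrow> eq W W' f f" using eqI by blast
lemma eq_sym: "f \<in> H W W' \<Longrightarrow> g \<in> H W W' \<Longrightarrow> eq W W' f g \<Longrightarrow> eq W W' g f"
  by (rule eqI) (simp_all add: eqD)
lemma eq_trans: "f \<in> H W W' \<Longrightarrow> g \<in> H W W' \<Longrightarrow> h \<in> H W W' \<Longrightarrow> eq W W' f g \<Longrightarrow> eq W W' g h \<Longrightarrow> eq W W' f h"
  by (rule eqI) (simp_all add: eqD)
lemma eq_add: "f \<in> H W W' \<Longrightarrow> g \<in> H W W' \<Longrightarrow> f' \<in> H W W' \<Longrightarrow> g' \<in> H W W' \<Longrightarrow> eq W W' f f' \<Longrightarrow> eq W W' g g'
   \<Longrightarrow> eq W W' (ad f g) (ad f' g')"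
  using eq_iff[of f W W' f'] eq_iff[of g W W' g'] by (intro eqI) (simp_all add: pv_add)
lemma eq_sm: "f \<in> H W W' \<Longrightarrow> f' \<in> H W W' \<Longrightarrow> eq W W' f f' \<Longrightarrow> eq W W' (sm a f) (sm a f')"
  using eq_iff[of f W W' f'] by (intro eqI) (simp_all add: pv_sm)
lemma eq_cp_l: "f \<in> H W W' \<Longrightarrow> g \<in> H W W' \<Longrightarrow> h \<in> H W' W'' \<Longrightarrow> eq W W' f g \<Longrightarrow> eq W W'' (cp h f) (cp h g)"
  apply (rule eqI[OF cp_in cp_in], assumption+)
  apply (simp add: pv_cp_l eqD cp_in)
  done
lemma eq_cp_r: "f \<in> H W W' \<Longrightarrow> g \<in> H W W' \<Longrightarrow> h \<in> H V W \<Longrightarrow> eq W W' f g \<Longrightarrow> eq V W' (cp f h) (cp g h)"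
  apply (rule eqI[OF cp_in cp_in], assumption+)
  apply (simp add: pv_cp_r eqD cp_in)
  done

lemma K1: "s \<in> H U U \<Longrightarrow> eq U U s (sm (ev s) (idm U))"
  by (rule eqI) (auto simp: pv_U pv_sm ev_sm ev_one)
lemma K3: "s \<in> H U U \<Longrightarrow> t \<in> H U U \<Longrightarrow> eq U U s t \<Longrightarrow> ev s = ev t"
  using eqD[of U U s t "idm U"] pv_U[of s "idm U"] pv_U[of t "idm U"] by (simp add: ev_one)
lemma eq_tr: "p \<in> H W W \<Longrightarrow> q \<in> H W W \<Longrightarrow> eq W W p q \<Longrightarrow> ev (tr C W p) = ev (tr C W q)"
  using eqD[of W W p q "idm W"] unfolding pv_def by (simp add: cp_id_l)
lemma I1_pv: "x \<in> II W W' \<Longrightarrow> S \<in> H W' W \<Longrightarrow> pv W S x = 0"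
  using I1_iff by blast

lemma pairing_pv: "pairing C ev W S f = pv W S f" unfolding pairing_def pv_def by simp

lemma pv_rev: assumes X: "X \<in> H V W" and f: "f \<in> H W V"
  shows "pv W (rev C f) (rev C X) = \<iota> (pv W X f)"
  unfolding pv_def using rev_cp[OF f X] tr_rev[OF cp_in[OF f X]] ev_rev[OF tr_in[OF cp_in[OF f X]]] by simp

lemma pair_inj: assumes a: "f \<in> H W V" "g \<in> H W V"
  and h: "\<forall>S\<in>H W V. pairing C ev W (rev C f) S = pairing C ev W (rev C g) S"
  shows "eq W V f g"
proof (rule eqI[OF a])
  fix X assume X: "X \<in> H V W"
  have "\<iota> (pv W X f) = \<iota> (pv W X g)"
    using h[rule_format, OF rev_in[OF X]] pv_rev[OF X a(1)] pv_rev[OF X a(2)] by (simp add: pairing_pv)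
  thus "pv W X f = pv W X g" by (rule iota_inj)
qed

end

context P1 begin

abbreviation "ms \<equiv> msum C"

lemma ms_Nil[simp]: "ms A B [] = z A B" unfolding msum_def by simp
lemma ms_Cons[simp]: "ms A B (x # xs) = ad x (ms A B xs)" unfolding msum_def by simp
lemma ms_in[intro]: "set xs \<subseteq> H A B \<Longrightarrow> ms A B xs \<in> H A B"
  by (induction xs) auto
lemma ms_in_map[intro]: "(\<And>x. x \<in> set xs \<Longrightarrow> f x \<in> H A B) \<Longrightarrow> ms A B (map f xs) \<in> H A B"
  by (rule ms_in) auto

lemma lin_msum:
  assumes Lin: "\<And>x. x \<in> H A B \<Longrightarrow> L x \<in> H A' B'"
    and Ladd: "\<And>x y. x \<in> H A B \<Longrightarrow> y \<in> H A B \<Longrightarrow> L (ad x y) = ad (L x) (L y)"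
    and Lz: "L (z A B) = z A' B'"
  shows "set xs \<subseteq> H A B \<Longrightarrow> L (ms A B xs) = ms A' B' (map L xs)"
proof (induction xs)
  case Nil then show ?case using Lz by simp
next
  case (Cons x xs) then show ?case using Ladd[of x "ms A B xs"] ms_in by auto
qed

lemma scal_msum:
  assumes Ladd: "\<And>x y. x \<in> H A B \<Longrightarrow> y \<in> H A B \<Longrightarrow> L (ad x y) = L x + L y"
    and Lz: "L (z A B) = 0"
  shows "set xs \<subseteq> H A B \<Longrightarrow> L (ms A B xs) = sum_list (map L xs)"
proof (induction xs)
  case Nil then show ?case using Lz by simp
next
  case (Cons x xs) then show ?case using Ladd[of x "ms A B xs"] ms_in by auto
qed

lemma cp_msum_l: "h \<in> H B E \<Longrightarrow> set xs \<subseteq> H A B \<Longrightarrow> cp h (ms A B xs) = ms A E (map (cp h) xs)"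
  by (rule lin_msum[where L="cp h"]) (auto intro: cp_in simp: cp_add_r cp_z_r)
lemma cp_msum_r: "h \<in> H V A \<Longrightarrow> set xs \<subseteq> H A B \<Longrightarrow> cp (ms A B xs) h = ms V B (map (\<lambda>x. cp x h) xs)"
  by (rule lin_msum[where L="\<lambda>x. cp x h"]) (auto intro: cp_in simp: cp_add_l cp_z_l)
lemma pv_msum: "S \<in> H W' W \<Longrightarrow> set xs \<subseteq> H W W' \<Longrightarrow> pv W S (ms W W' xs) = sum_list (map (pv W S) xs)"
  by (rule scal_msum[where L="pv W S"]) (auto simp: pv_add pv_z)

lemma pv_add1: "S \<in> H W' W \<Longrightarrow> T \<in> H W' W \<Longrightarrow> f \<in> H W W' \<Longrightarrow> pv W (ad S T) f = pv W S f + pv W T f"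
  unfolding pv_def using cp_add_l[of f W W' S W T] tr_add[OF cp_in[of f W W' S W] cp_in[of f W W' T W]]
    ev_add[OF tr_in tr_in] cp_in by simp
lemma pv_sm1: "S \<in> H W' W \<Longrightarrow> f \<in> H W W' \<Longrightarrow> pv W (sm a S) f = a * pv W S f"
  unfolding pv_def using cp_sm_l[of f W W' S W a] tr_sm[OF cp_in[of f W W' S W]] ev_sm[OF tr_in[OF cp_in[of f W W' S W]]]
   by simp
lemma pv_z1: "f \<in> H W W' \<Longrightarrow> pv W (z W' W) f = 0"
  unfolding pv_def using cp_z_l[of f W W' W] tr_sm[OF z_in, where a=0 and W=W] sm_zero[OF z_in] sm_zero[OF tr_in[OF z_in]] ev_z
  by simp
lemma pv_msum1: "f \<in> H W W' \<Longrightarrow> set xs \<subseteq> H W' W \<Longrightarrow> pv W (ms W' W xs) f = sum_list (map (\<lambda>x. pv W x f) xs)"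
  by (rule scal_msum[where L="\<lambda>x. pv W x f"]) (auto simp: pv_add1 pv_z1)

lemma pv_swap: "S \<in> H W' W \<Longrightarrow> Y \<in> H W W' \<Longrightarrow> pv W S Y = pv W' Y S"
  unfolding pv_def using tr_cyc[of Y W W' S] by simp

lemma pv_scal: assumes s: "s \<in> H U U" and f: "f \<in> H W U" and Y: "Y \<in> H U W"
  shows "pv W Y (cp s f) = ev s * pv W Y f"
proof -
  have "eq W U (cp s f) (cp (sm (ev s) (idm U)) f)" by (rule eq_cp_r[OF s _ f K1[OF s]]) simp
  hence "pv W Y (cp s f) = pv W Y (cp (sm (ev s) (idm U)) f)"
    using eqD cp_in[OF f s] cp_in[OF f, of "sm (ev s) (idm U)"] Y by blast
  also have "\<dots> = pv W Y (sm (ev s) f)" using cp_sm_l[OF f id_in] cp_id_l[OF f] by simp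
  finally show ?thesis using pv_sm[OF f Y] by simp
qed

lemma pv_scal2: assumes s: "s \<in> H U U" and g: "g \<in> H U W" and S: "S \<in> H W U"
  shows "pv U S (cp g s) = ev s * pv U S g"
proof -
  have "eq U W (cp g s) (cp g (sm (ev s) (idm U)))" by (rule eq_cp_l[OF s _ g K1[OF s]]) simp
  hence "pv U S (cp g s) = pv U S (cp g (sm (ev s) (idm U)))"
    using eqD cp_in[OF s g] cp_in[OF _ g, of "sm (ev s) (idm U)"] S by blast
  also have "\<dots> = pv U S (sm (ev s) g)" using cp_sm_r[OF id_in g] cp_id_r[OF g] by simp
  finally show ?thesis using pv_sm[OF g S] by simp
qed

lemma lincomb_alt: "length cs = length bs \<Longrightarrow>
   lincomb C A B cs bs = ms A B (map (\<lambda>i. sm (cs ! i) (bs ! i)) [0..<length bs])"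
  unfolding lincomb_def by (intro arg_cong[where f="ms A B"] nth_equalityI) auto

lemma map_in: "(\<And>i. i < m \<Longrightarrow> F i \<in> H A B) \<Longrightarrow> set (map F [0..<m]) \<subseteq> H A B"
  by auto

lemma sum_list_upt_sum: "sum_list (map F [0..<n]) = (\<Sum>i<n. F i)"
  by (metis atLeast0LessThan set_upt sum_set_upt_conv_sum_list_nat)

lemma nth_H: "set bs \<subseteq> H W W' \<Longrightarrow> i < length bs \<Longrightarrow> bs ! i \<in> H W W'"
  using nth_mem by blast

lemma lincomb_in: "length cs = length bs \<Longrightarrow> set bs \<subseteq> H W W' \<Longrightarrow> lincomb C W W' cs bs \<in> H W W'"
  using lincomb_alt by (auto intro!: ms_in_map sm_in nth_H)

lemma pv_lincomb: assumes "length cs = length bs" "set bs \<subseteq> H W W'" "S \<in> H W' W"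
  shows "pv W S (lincomb C W W' cs bs) = (\<Sum>i<length bs. cs ! i * pv W S (bs ! i))"
proof -
  have "pv W S (lincomb C W W' cs bs) = sum_list (map (pv W S) (map (\<lambda>i. sm (cs ! i) (bs ! i)) [0..<length bs]))"
  proof -
    have st: "set (map (\<lambda>i. sm (cs ! i) (bs ! i)) [0..<length bs]) \<subseteq> H W W'" using assms nth_H by auto
    show ?thesis using assms lincomb_alt pv_msum[OF assms(3) st] by simp
  qed
  also have "\<dots> = sum_list (map (\<lambda>i. cs ! i * pv W S (bs ! i)) [0..<length bs])"
    unfolding map_map o_def
  proof (rule arg_cong[where f=sum_list], rule map_cong[OF refl])
    fix x assume "x \<in> set [0..<length bs]"
    hence "bs ! x \<in> H W W'" using assms nth_H by auto
    thus "pv W S (sm (cs ! x) (bs ! x)) = cs ! x * pv W S (bs ! x)" using pv_sm assms(3) by simp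
  qed
  finally show ?thesis by (simp add: sum_list_upt_sum)
qed

definition bip :: "'o \<Rightarrow> nat \<Rightarrow> (nat \<Rightarrow> 'm) \<Rightarrow> (nat \<Rightarrow> 'm) \<Rightarrow> bool" where
  "bip W m f g \<longleftrightarrow> (\<forall>i<m. f i \<in> H W U \<and> g i \<in> H U W) \<and>
     (\<forall>i<m. \<forall>j<m. ev (cp (f i) (g j)) = (if i = j then 1 else 0)) \<and>
     (\<forall>S\<in>H W W. pv W S (idm W) = (\<Sum>i<m. pv W S (cp (g i) (f i))))"

lemma bip_from: assumes "biproduct_of_units1 C ev W m" shows "\<exists>f g. bip W m f g"
proof -
  obtain fs gs where l: "length fs = m" "length gs = m" and s: "set fs \<subseteq> H W U" "set gs \<subseteq> H U W"
    and d: "\<forall>i<m. \<forall>j<m. eq U U (cp (fs ! i) (gs ! j)) (if i = j then idm U else z U U)"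
    and c: "eq W W (ms W W (map2 cp gs fs)) (idm W)"
    using assms unfolding biproduct_of_units1_def by blast
  have fi: "fs ! i \<in> H W U" if "i < m" for i using s l that by auto
  have gi: "gs ! i \<in> H U W" if "i < m" for i using s l that by auto
  have m2: "map2 cp gs fs = map (\<lambda>i. cp (gs ! i) (fs ! i)) [0..<m]"
    using l by (intro nth_equalityI) auto
  have "bip W m (\<lambda>i. fs ! i) (\<lambda>i. gs ! i)"
    unfolding bip_def
  proof (intro conjI allI impI ballI)
    fix i assume "i < m" then show "fs ! i \<in> H W U" "gs ! i \<in> H U W" using fi gi by auto
  next
    fix i j assume ij: "i < m" "j < m"
    have "ev (cp (fs ! i) (gs ! j)) = ev (if i = j then idm U else z U U)"
      using K3[OF cp_in[OF gi fi]] d ij by (simp add: z_in)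
    then show "ev (cp (fs ! i) (gs ! j)) = (if i = j then 1 else 0)" by (simp add: ev_one ev_z)
  next
    fix S assume S: "S \<in> H W W"
    have inT: "ms W W (map2 cp gs fs) \<in> H W W" unfolding m2 using fi gi by (intro ms_in_map) (auto intro: cp_in)
    have "pv W S (idm W) = pv W S (ms W W (map2 cp gs fs))"
      using eqD[OF c inT id_in S] by simp
    also have "\<dots> = sum_list (map (\<lambda>i. pv W S (cp (gs ! i) (fs ! i))) [0..<m])"
      unfolding m2 using pv_msum[OF S map_in, of m "\<lambda>i. cp (gs ! i) (fs ! i)"] cp_in[OF fi gi] by (simp add: o_def)
    finally show "pv W S (idm W) = (\<Sum>i<m. pv W S (cp (gs ! i) (fs ! i)))" by (simp add: sum_list_upt_sum)
  qed
  thus ?thesis by blast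
qed

lemma bip_to: assumes b: "bip W m f g" shows "biproduct_of_units1 C ev W m"
proof -
  have fi: "f i \<in> H W U" "g i \<in> H U W" if "i < m" for i using b that unfolding bip_def by auto
  have m2: "map2 cp (map g [0..<m]) (map f [0..<m]) = map (\<lambda>i. cp (g i) (f i)) [0..<m]"
    by (intro nth_equalityI) auto
  have inT: "ms W W (map (\<lambda>i. cp (g i) (f i)) [0..<m]) \<in> H W W" using fi by (intro ms_in_map) (auto intro: cp_in)
  have A1: "set (map f [0..<m]) \<subseteq> H W U" "set (map g [0..<m]) \<subseteq> H U W" using fi by auto
  have A2: "\<forall>i<m. \<forall>j<m. eq U U (cp (map f [0..<m] ! i) (map g [0..<m] ! j)) (if i = j then idm U else z U U)"
  proof (intro allI impI)
    fix i j assume ij: "i < m" "j < m"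
    have c: "cp (f i) (g j) \<in> H U U" using cp_in fi ij by blast
    have e: "ev (cp (f i) (g j)) = (if i = j then 1 else 0)" using b ij unfolding bip_def by blast
    have "eq U U (cp (f i) (g j)) (sm (ev (cp (f i) (g j))) (idm U))" by (rule K1[OF c])
    moreover have "sm (ev (cp (f i) (g j))) (idm U) = (if i = j then idm U else z U U)"
      using e sm_one[OF id_in] sm_zero[OF id_in] by simp
    ultimately show "eq U U (cp (map f [0..<m] ! i) (map g [0..<m] ! j)) (if i = j then idm U else z U U)"
      using ij by simp
  qed
  have A3: "eq W W (ms W W (map2 cp (map g [0..<m]) (map f [0..<m]))) (idm W)"
    unfolding m2
  proof (rule eqI[OF inT id_in])
    fix S assume S: "S \<in> H W W"
    have "pv W S (ms W W (map (\<lambda>i. cp (g i) (f i)) [0..<m])) = sum_list (map (\<lambda>i. pv W S (cp (g i) (f i))) [0..<m])"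
      using pv_msum[OF S map_in, of m "\<lambda>i. cp (g i) (f i)"] cp_in[OF fi(1) fi(2)] by (simp add: o_def)
    also have "\<dots> = pv W S (idm W)" using b S unfolding bip_def by (simp add: sum_list_upt_sum)
    finally show "pv W S (ms W W (map (\<lambda>i. cp (g i) (f i)) [0..<m])) = pv W S (idm W)" .
  qed
  show ?thesis unfolding biproduct_of_units1_def
    using A1 A2 A3 by (intro exI[of _ "map f [0..<m]"] exI[of _ "map g [0..<m]"]) simp
qed

end

context P1 begin

lemma bipD: assumes "bip W m f g"
  shows "\<And>i. i < m \<Longrightarrow> f i \<in> H W U" "\<And>i. i < m \<Longrightarrow> g i \<in> H U W"
    "\<And>i j. i < m \<Longrightarrow> j < m \<Longrightarrow> ev (cp (f i) (g j)) = (if i = j then 1 else 0)"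
    "\<And>S. S \<in> H W W \<Longrightarrow> pv W S (idm W) = (\<Sum>i<m. pv W S (cp (g i) (f i)))"
  using assms unfolding bip_def by auto

lemma bip_expL: assumes b: "bip W m f g" and Z: "Z \<in> H W W'" and S: "S \<in> H W' W"
  shows "pv W S Z = (\<Sum>i<m. pv W S (cp Z (cp (g i) (f i))))"
proof -
  have "pv W S Z = pv W S (cp Z (idm W))" using cp_id_r[OF Z] by simp
  also have "\<dots> = pv W (cp S Z) (idm W)" using pv_cp_l[OF id_in Z S] by simp
  also have "\<dots> = (\<Sum>i<m. pv W (cp S Z) (cp (g i) (f i)))" using bipD(4)[OF b cp_in[OF Z S]] by simp
  also have "\<dots> = (\<Sum>i<m. pv W S (cp Z (cp (g i) (f i))))"
    using pv_cp_l[OF cp_in[OF bipD(1)[OF b] bipD(2)[OF b]] Z S] by simp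
  finally show ?thesis .
qed

lemma bip_expR: assumes b: "bip V n f g" and Z: "Z \<in> H W V" and S: "S \<in> H V W"
  shows "pv W S Z = (\<Sum>j<n. pv W S (cp (cp (g j) (f j)) Z))"
proof -
  have "pv W S Z = pv W S (cp (idm V) Z)" using cp_id_l[OF Z] by simp
  also have "\<dots> = pv V (cp Z S) (idm V)" using pv_cp_r[OF id_in Z S] by simp
  also have "\<dots> = (\<Sum>j<n. pv V (cp Z S) (cp (g j) (f j)))" using bipD(4)[OF b cp_in[OF S Z]] by simp
  also have "\<dots> = (\<Sum>j<n. pv W S (cp (cp (g j) (f j)) Z))"
    using pv_cp_r[OF cp_in[OF bipD(1)[OF b] bipD(2)[OF b]] Z S] by simp
  finally show ?thesis .
qed

lemma SPAN: assumes bW: "bip W m f g" and bV: "bip V n f' g'" and Sg: "\<Sigma> \<in> H W V" and X: "X \<in> H V W"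
  shows "pv W X \<Sigma> = (\<Sum>j<n. \<Sum>i<m. ev (cp (cp (f' j) \<Sigma>) (g i)) * pv W X (cp (g' j) (f i)))"
proof -
  have tm: "pv W X (cp (cp (cp (g' j) (f' j)) \<Sigma>) (cp (g i) (f i))) =
      ev (cp (cp (f' j) \<Sigma>) (g i)) * pv W X (cp (g' j) (f i))" if ij: "j < n" "i < m" for i j
  proof -
    have fj: "f' j \<in> H V U" and gj: "g' j \<in> H U V" using bipD[OF bV] ij by auto
    have fi: "f i \<in> H W U" and gi: "g i \<in> H U W" using bipD[OF bW] ij by auto
    define s where "s = cp (cp (f' j) \<Sigma>) (g i)"
    have s: "s \<in> H U U" unfolding s_def using cp_in[OF gi cp_in[OF Sg fj]] .
    have fS: "cp (f' j) \<Sigma> \<in> H W U" using cp_in[OF Sg fj] .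
    have "cp (cp (cp (g' j) (f' j)) \<Sigma>) (cp (g i) (f i)) = cp (cp (g' j) (cp (f' j) \<Sigma>)) (cp (g i) (f i))"
      using cp_assoc[OF Sg fj gj] by simp
    also have "\<dots> = cp (g' j) (cp (cp (f' j) \<Sigma>) (cp (g i) (f i)))"
      using cp_assoc[OF cp_in[OF fi gi] fS gj] by simp
    also have "\<dots> = cp (g' j) (cp s (f i))"
      using cp_assoc[OF fi gi fS] s_def by simp
    finally have e: "cp (cp (cp (g' j) (f' j)) \<Sigma>) (cp (g i) (f i)) = cp (g' j) (cp s (f i))" .
    have "pv W X (cp (g' j) (cp s (f i))) = pv W (cp X (g' j)) (cp s (f i))"
      using pv_cp_l[OF cp_in[OF fi s] gj X] .
    also have "\<dots> = ev s * pv W (cp X (g' j)) (f i)" using pv_scal[OF s fi cp_in[OF gj X]] .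
    also have "\<dots> = ev s * pv W X (cp (g' j) (f i))" using pv_cp_l[OF fi gj X] by simp
    finally show ?thesis using e s_def by simp
  qed
  have "pv W X \<Sigma> = (\<Sum>j<n. pv W X (cp (cp (g' j) (f' j)) \<Sigma>))" by (rule bip_expR[OF bV Sg X])
  also have "\<dots> = (\<Sum>j<n. \<Sum>i<m. pv W X (cp (cp (cp (g' j) (f' j)) \<Sigma>) (cp (g i) (f i))))"
  proof (rule sum.cong[OF refl])
    fix j assume "j \<in> {..<n}"
    hence j: "j < n" by simp
    have "cp (cp (g' j) (f' j)) \<Sigma> \<in> H W V"
      using cp_in[OF Sg cp_in[OF bipD(1)[OF bV j] bipD(2)[OF bV j]]] .
    thus "pv W X (cp (cp (g' j) (f' j)) \<Sigma>) = (\<Sum>i<m. pv W X (cp (cp (cp (g' j) (f' j)) \<Sigma>) (cp (g i) (f i))))"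
      by (rule bip_expL[OF bW _ X])
  qed
  also have "\<dots> = (\<Sum>j<n. \<Sum>i<m. ev (cp (cp (f' j) \<Sigma>) (g i)) * pv W X (cp (g' j) (f i)))"
    using tm by (intro sum.cong refl) auto
  finally show ?thesis .
qed

lemma PVBB: assumes bW: "bip W m f g" and bV: "bip V n f' g'" and idx: "l < n" "j < n" "i < m" "k < m"
  shows "pv W (cp (g k) (f' l)) (cp (g' j) (f i)) = (if l = j \<and> i = k then 1 else 0)"
proof -
  have fl: "f' l \<in> H V U" and gj: "g' j \<in> H U V" using bipD[OF bV] idx by auto
  have fi: "f i \<in> H W U" and gk: "g k \<in> H U W" using bipD[OF bW] idx by auto
  have b: "cp (cp (f' l) (g' j)) (f i) \<in> H W U" using cp_in[OF fi cp_in[OF gj fl]] .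
  have "cp (cp (g k) (f' l)) (cp (g' j) (f i)) = cp (g k) (cp (f' l) (cp (g' j) (f i)))"
    using cp_assoc[OF cp_in[OF fi gj] fl gk] by simp
  also have "\<dots> = cp (g k) (cp (cp (f' l) (g' j)) (f i))" using cp_assoc[OF fi gj fl] by simp
  finally have e: "cp (cp (g k) (f' l)) (cp (g' j) (f i)) = cp (g k) (cp (cp (f' l) (g' j)) (f i))" .
  have "pv W (cp (g k) (f' l)) (cp (g' j) (f i)) = ev (cp (cp (cp (f' l) (g' j)) (f i)) (g k))"
    unfolding pv_def e using K6[OF gk b] by simp
  also have "\<dots> = ev (cp (cp (f' l) (g' j)) (cp (f i) (g k)))"
    using cp_assoc[OF gk fi cp_in[OF gj fl]] by simp
  also have "\<dots> = ev (cp (f' l) (g' j)) * ev (cp (f i) (g k))"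
    using ev_cp[OF cp_in[OF gj fl] cp_in[OF gk fi]] .
  finally show ?thesis using bipD(3)[OF bV idx(1,2)] bipD(3)[OF bW idx(3,4)] by auto
qed

lemma PVXS: assumes bW: "bip W m f g" and bV: "bip V n f' g'" and idx: "j < n" "i < m" and Sg: "\<Sigma> \<in> H W V"
  shows "pv W (cp (g i) (f' j)) \<Sigma> = ev (cp (cp (f' j) \<Sigma>) (g i))"
proof -
  have fj: "f' j \<in> H V U" using bipD[OF bV] idx by auto
  have gi: "g i \<in> H U W" using bipD[OF bW] idx by auto
  have "cp (cp (g i) (f' j)) \<Sigma> = cp (g i) (cp (f' j) \<Sigma>)" using cp_assoc[OF Sg fj gi] by simp
  thus ?thesis unfolding pv_def using K6[OF gi cp_in[OF Sg fj]] by simp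
qed

end

context P1 begin

lemma sum_list_product: "sum_list (map F (List.product xs ys)) = sum_list (map (\<lambda>x. sum_list (map (\<lambda>y. F (x, y)) ys)) xs)"
  by (induction xs) (auto simp: o_def)

lemma sum_list_prod_upt: "sum_list (map F (List.product [0..<n] [0..<m])) = (\<Sum>j<n. \<Sum>i<m. F (j, i))"
  by (simp add: sum_list_product sum_list_upt_sum)

lemma sum_nth: "(\<Sum>t<length P. G (P ! t)) = sum_list (map G P)"
proof -
  have "map (\<lambda>t. G (P ! t)) [0..<length P] = map G P" by (rule nth_equalityI) auto
  thus ?thesis using sum_list_upt_sum[of "\<lambda>t. G (P ! t)" "length P"] by simp
qed

lemma dual_add: "\<phi> \<in> dual1 C ev W V \<Longrightarrow> f \<in> H W V \<Longrightarrow> g \<in> H W V \<Longrightarrow> \<phi> (ad f g) = \<phi> f + \<phi> g"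
  unfolding dual1_def by blast
lemma dual_sm: "\<phi> \<in> dual1 C ev W V \<Longrightarrow> f \<in> H W V \<Longrightarrow> \<phi> (sm a f) = a * \<phi> f"
  unfolding dual1_def by blast
lemma dual_I: "\<phi> \<in> dual1 C ev W V \<Longrightarrow> f \<in> II W V \<Longrightarrow> \<phi> f = 0"
  unfolding dual1_def by blast
lemma dual_z: "\<phi> \<in> dual1 C ev W V \<Longrightarrow> \<phi> (z W V) = 0"
  using dual_sm[of \<phi> W V "z W V" 0] sm_zero[OF z_in] by simp
lemma dual_eq: assumes "\<phi> \<in> dual1 C ev W V" "f \<in> H W V" "g \<in> H W V" "eq W V f g" shows "\<phi> f = \<phi> g"
proof -
  have "\<phi> (sb f g) = 0" using dual_I[OF assms(1)] assms(4) unfolding eq1_def sb_def by blast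
  thus ?thesis unfolding sb_def using dual_add[OF assms(1) assms(2) sm_in[OF assms(3)]] dual_sm[OF assms(1) assms(3)]
    by simp
qed
lemma dual_lincomb: assumes d: "\<phi> \<in> dual1 C ev W V" and l: "length cs = length bs" and s: "set bs \<subseteq> H W V"
  shows "\<phi> (lincomb C W V cs bs) = (\<Sum>i<length bs. cs ! i * \<phi> (bs ! i))"
proof -
  have st: "set (map (\<lambda>i. sm (cs ! i) (bs ! i)) [0..<length bs]) \<subseteq> H W V" using s nth_H by auto
  have "\<phi> (lincomb C W V cs bs) = sum_list (map \<phi> (map (\<lambda>i. sm (cs ! i) (bs ! i)) [0..<length bs]))"
    using lincomb_alt[OF l] scal_msum[where L=\<phi>, OF dual_add[OF d] dual_z[OF d] st] by simp
  also have "\<dots> = sum_list (map (\<lambda>i. cs ! i * \<phi> (bs ! i)) [0..<length bs])"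
    unfolding map_map o_def
  proof (rule arg_cong[where f=sum_list], rule map_cong[OF refl])
    fix x assume "x \<in> set [0..<length bs]"
    hence "bs ! x \<in> H W V" using s nth_H by auto
    thus "\<phi> (sm (cs ! x) (bs ! x)) = cs ! x * \<phi> (bs ! x)" using dual_sm[OF d] by simp
  qed
  finally show ?thesis by (simp add: sum_list_upt_sum)
qed


lemma A_M': assumes A: "propA C ev" shows "propM' C ev"
  unfolding propM'_def
proof (intro allI ballI)
  fix W W' \<Sigma> assume Sg: "\<Sigma> \<in> H W W'"
  obtain n f' g' where bV: "bip W' n f' g'" using A bip_from unfolding propA_def by blast
  note b = bipD[OF bV]
  define ps where "ps = map (\<lambda>j. (g' j, cp (f' j) \<Sigma>)) [0..<n]"
  have tin: "\<And>j. j < n \<Longrightarrow> cp (g' j) (cp (f' j) \<Sigma>) \<in> H W W'"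
    using cp_in[OF cp_in[OF Sg b(1)] b(2)] by blast
  have T: "ms W W' (map (\<lambda>(a, b). cp a b) ps) = ms W W' (map (\<lambda>j. cp (g' j) (cp (f' j) \<Sigma>)) [0..<n])"
    unfolding ps_def by (simp add: o_def)
  have "eq W W' \<Sigma> (ms W W' (map (\<lambda>(a, b). cp a b) ps))"
    unfolding T
  proof (rule eqI[OF Sg ms_in[OF map_in[OF tin]]])
    fix S assume S: "S \<in> H W' W"
    have "pv W S \<Sigma> = (\<Sum>j<n. pv W S (cp (cp (g' j) (f' j)) \<Sigma>))" by (rule bip_expR[OF bV Sg S])
    also have "\<dots> = (\<Sum>j<n. pv W S (cp (g' j) (cp (f' j) \<Sigma>)))"
      using cp_assoc[OF Sg b(1) b(2)] by simp
    also have "\<dots> = pv W S (ms W W' (map (\<lambda>j. cp (g' j) (cp (f' j) \<Sigma>)) [0..<n]))"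
      using pv_msum[OF S map_in[OF tin]] by (simp add: o_def sum_list_upt_sum)
    finally show "pv W S \<Sigma> = pv W S (ms W W' (map (\<lambda>j. cp (g' j) (cp (f' j) \<Sigma>)) [0..<n]))" .
  qed
  moreover have "\<forall>(a, b)\<in>set ps. a \<in> H U W' \<and> b \<in> H W U"
    unfolding ps_def using b(2) cp_in[OF Sg b(1)] by auto
  ultimately show "\<exists>ps. (\<forall>(a, b)\<in>set ps. a \<in> H U W' \<and> b \<in> H W U) \<and>
      eq W W' \<Sigma> (ms W W' (map (\<lambda>(a, b). cp a b) ps))" by blast
qed

lemma P_mem: "p \<in> set (List.product [0..<n] [0..<m]) \<Longrightarrow> fst p < n \<and> snd p < m"
  by auto

lemma bs_in: assumes bW: "bip W m f g" and bV: "bip V n f' g'"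
  shows "set (map (\<lambda>(j, i). cp (g' j) (f i)) (List.product [0..<n] [0..<m])) \<subseteq> H W V"
  using bipD(1)[OF bW] bipD(2)[OF bV] cp_in by fastforce

lemma SPAN_lc: assumes bW: "bip W m f g" and bV: "bip V n f' g'" and Sg: "\<Sigma> \<in> H W V"
  shows "eq W V \<Sigma> (lincomb C W V (map (\<lambda>(j, i). ev (cp (cp (f' j) \<Sigma>) (g i))) (List.product [0..<n] [0..<m]))
                                  (map (\<lambda>(j, i). cp (g' j) (f i)) (List.product [0..<n] [0..<m])))"
    (is "eq W V \<Sigma> (lincomb C W V ?cs ?bs)")
proof -
  define P where "P = List.product [0..<n] [0..<m]"
  have l: "length ?cs = length ?bs" by simp
  have bsin: "set ?bs \<subseteq> H W V" by (rule bs_in[OF bW bV])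
  show ?thesis
  proof (rule eqI[OF Sg lincomb_in[OF l bsin]])
    fix X assume X: "X \<in> H V W"
    have "pv W X (lincomb C W V ?cs ?bs) = (\<Sum>t<length ?bs. ?cs ! t * pv W X (?bs ! t))"
      by (rule pv_lincomb[OF l bsin X])
    also have "\<dots> = (\<Sum>t<length P. (\<lambda>(j, i). ev (cp (cp (f' j) \<Sigma>) (g i)) * pv W X (cp (g' j) (f i))) (P ! t))"
      unfolding P_def by (intro sum.cong refl) (auto split: prod.splits)
    also have "\<dots> = (\<Sum>j<n. \<Sum>i<m. ev (cp (cp (f' j) \<Sigma>) (g i)) * pv W X (cp (g' j) (f i)))"
      unfolding sum_nth P_def sum_list_prod_upt by simp
    also have "\<dots> = pv W X \<Sigma>" using SPAN[OF bW bV Sg X] by simp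
    finally show "pv W X \<Sigma> = pv W X (lincomb C W V ?cs ?bs)" by simp
  qed
qed

lemma INDEP: assumes bW: "bip W m f g" and bV: "bip V n f' g'"
  and l: "length cs = length (List.product [0..<n] [0..<m])"
  and I: "lincomb C W V cs (map (\<lambda>(j, i). cp (g' j) (f i)) (List.product [0..<n] [0..<m])) \<in> II W V"
  and t0: "t0 < length (List.product [0..<n] [0..<m])"
  shows "cs ! t0 = 0"
proof -
  define P where "P = List.product [0..<n] [0..<m]"
  define bs where "bs = map (\<lambda>(j, i). cp (g' j) (f i)) P"
  have l': "length cs = length bs" using l unfolding bs_def P_def by simp
  have bsin: "set bs \<subseteq> H W V" unfolding bs_def P_def by (rule bs_in[OF bW bV])
  obtain l k where lk: "P ! t0 = (l, k)" by fastforce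
  have "P ! t0 \<in> set P" using t0 unfolding P_def by (rule nth_mem)
  hence lk': "l < n" "k < m" using lk unfolding P_def by auto
  have S: "cp (g k) (f' l) \<in> H V W" using cp_in[OF bipD(1)[OF bV lk'(1)] bipD(2)[OF bW lk'(2)]] .
  have dist: "distinct P" unfolding P_def by (simp add: distinct_product)
  have "0 = pv W (cp (g k) (f' l)) (lincomb C W V cs bs)"
    using I1_pv[OF I S] unfolding bs_def P_def by simp
  also have "\<dots> = (\<Sum>t<length bs. cs ! t * pv W (cp (g k) (f' l)) (bs ! t))"
    by (rule pv_lincomb[OF l' bsin S])
  also have "\<dots> = (\<Sum>t<length P. if t = t0 then cs ! t else 0)"
  proof (rule sum.cong)
    show "{..<length bs} = {..<length P}" unfolding bs_def by simp
  next
    fix t assume "t \<in> {..<length P}"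
    hence t: "t < length P" by simp
    obtain j i where ji: "P ! t = (j, i)" by fastforce
    have "P ! t \<in> set P" using t by simp
    hence ji': "j < n" "i < m" using ji unfolding P_def by auto
    have "pv W (cp (g k) (f' l)) (bs ! t) = (if l = j \<and> i = k then 1 else 0)"
      unfolding bs_def using t ji PVBB[OF bW bV lk'(1) ji'(1) ji'(2) lk'(2)] by simp
    moreover have "(l = j \<and> i = k) \<longleftrightarrow> t = t0"
      using nth_eq_iff_index_eq[OF dist t t0[folded P_def]] lk ji by auto
    ultimately show "cs ! t * pv W (cp (g k) (f' l)) (bs ! t) = (if t = t0 then cs ! t else 0)" by simp
  qed
  also have "\<dots> = cs ! t0" using t0 unfolding P_def by simp
  finally show ?thesis by simp
qed

lemma SURJ: assumes bW: "bip W m f g" and bV: "bip V n f' g'" and d: "\<phi> \<in> dual1 C ev W V"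
  shows "\<exists>\<Sigma>'\<in>H W V. \<forall>\<Sigma>\<in>H W V. \<phi> \<Sigma> = pairing C ev W (rev C \<Sigma>') \<Sigma>"
proof -
  define P where "P = List.product [0..<n] [0..<m]"
  have Pm: "\<And>j i. (j, i) \<in> set P \<Longrightarrow> j < n \<and> i < m" unfolding P_def by auto
  define X where "X = ms V W (map (\<lambda>(j, i). sm (\<phi> (cp (g' j) (f i))) (cp (g i) (f' j))) P)"
  have xs: "set (map (\<lambda>(j, i). sm (\<phi> (cp (g' j) (f i))) (cp (g i) (f' j))) P) \<subseteq> H V W"
  proof -
    have "(\<lambda>(j, i). sm (\<phi> (cp (g' j) (f i))) (cp (g i) (f' j))) p \<in> H V W" if "p \<in> set P" for p
    proof -
      obtain j i where ji: "p = (j, i)" by (cases p)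
      have "j < n" "i < m" using Pm that ji by auto
      then show ?thesis using ji sm_in cp_in[OF bipD(1)[OF bV] bipD(2)[OF bW]] by simp
    qed
    thus ?thesis by auto
  qed
  have Xin: "X \<in> H V W" unfolding X_def by (rule ms_in[OF xs])
  have R: "rev C X \<in> H W V" by (rule rev_in[OF Xin])
  have RR: "rev C (rev C X) = X" by (rule rev_rev[OF Xin])
  show ?thesis
  proof (intro bexI[OF _ R] ballI)
    fix \<Sigma> assume Sg: "\<Sigma> \<in> H W V"
    define c where "c = (\<lambda>(j, i). ev (cp (cp (f' j) \<Sigma>) (g i)))"
    define B where "B = (\<lambda>(j::nat, i::nat). cp (g' j) (f i))"
    have "pairing C ev W (rev C (rev C X)) \<Sigma> = pv W X \<Sigma>" using RR pairing_pv by simp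
    also have "\<dots> = sum_list (map (\<lambda>x. pv W x \<Sigma>) (map (\<lambda>(j, i). sm (\<phi> (cp (g' j) (f i))) (cp (g i) (f' j))) P))"
      unfolding X_def by (rule pv_msum1[OF Sg xs])
    also have "\<dots> = sum_list (map (\<lambda>p. \<phi> (B p) * c p) P)"
      unfolding map_map o_def
    proof (rule arg_cong[where f=sum_list], rule map_cong[OF refl])
      fix p assume p: "p \<in> set P"
      obtain j i where ji: "p = (j, i)" by (cases p)
      have ji': "j < n" "i < m" using Pm p ji by auto
      have gf: "cp (g i) (f' j) \<in> H V W" using cp_in[OF bipD(1)[OF bV ji'(1)] bipD(2)[OF bW ji'(2)]] .
      show "(\<lambda>x. pv W x \<Sigma>) ((\<lambda>(j, i). sm (\<phi> (cp (g' j) (f i))) (cp (g i) (f' j))) p) = \<phi> (B p) * c p"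
        unfolding ji B_def c_def using pv_sm1[OF gf Sg] PVXS[OF bW bV ji' Sg] by simp
    qed
    finally have L: "pairing C ev W (rev C (rev C X)) \<Sigma> = sum_list (map (\<lambda>p. \<phi> (B p) * c p) P)" .
    have l: "length (map c P) = length (map B P)" by simp
    have bsin: "set (map B P) \<subseteq> H W V" unfolding B_def P_def by (rule bs_in[OF bW bV])
    have "eq W V \<Sigma> (lincomb C W V (map c P) (map B P))"
      unfolding c_def B_def P_def by (rule SPAN_lc[OF bW bV Sg])
    hence "\<phi> \<Sigma> = \<phi> (lincomb C W V (map c P) (map B P))"
      by (rule dual_eq[OF d Sg lincomb_in[OF l bsin]])
    also have "\<dots> = (\<Sum>t<length (map B P). map c P ! t * \<phi> (map B P ! t))"
      by (rule dual_lincomb[OF d l bsin])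
    also have "\<dots> = (\<Sum>t<length P. (\<lambda>p. c p * \<phi> (B p)) (P ! t))"
      by (intro sum.cong refl) auto
    also have "\<dots> = sum_list (map (\<lambda>p. \<phi> (B p) * c p) P)"
      using sum_nth[of "\<lambda>p. c p * \<phi> (B p)" P] by (simp add: mult.commute)
    finally show "\<phi> \<Sigma> = pairing C ev W (rev C (rev C X)) \<Sigma>" using L by simp
  qed
qed


lemma A_F: assumes A: "propA C ev" shows "propF C ev"
  unfolding propF_def
proof (intro allI conjI)
  fix V W
  obtain m f g where bW: "bip W m f g" using A bip_from unfolding propA_def by blast
  obtain n f' g' where bV: "bip V n f' g'" using A bip_from unfolding propA_def by blast
  define P where "P = List.product [0..<n] [0..<m]"
  define bs where "bs = map (\<lambda>(j, i). cp (g' j) (f i)) P"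
  have bsin: "set bs \<subseteq> H W V" unfolding bs_def P_def by (rule bs_in[OF bW bV])
  show "free_finite_rank1 C ev W V"
    unfolding free_finite_rank1_def
  proof (intro exI[of _ bs] conjI ballI allI impI)
    show "set bs \<subseteq> H W V" by (rule bsin)
  next
    fix \<Sigma> assume Sg: "\<Sigma> \<in> H W V"
    show "\<exists>cs. length cs = length bs \<and> eq W V \<Sigma> (lincomb C W V cs bs)"
      using SPAN_lc[OF bW bV Sg] unfolding bs_def P_def
      by (intro exI[of _ "map (\<lambda>(j, i). ev (cp (cp (f' j) \<Sigma>) (g i))) (List.product [0..<n] [0..<m])"]) simp
  next
    fix cs c assume h: "length cs = length bs \<and> lincomb C W V cs bs \<in> II W V" and c: "c \<in> set cs"
    obtain t0 where t0: "t0 < length cs" "cs ! t0 = c" using c by (metis in_set_conv_nth)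
    show "c = 0" using INDEP[OF bW bV, of cs t0] h t0 unfolding bs_def P_def by simp
  qed
  show "pairing_bij C ev W V"
    unfolding pairing_bij_def
  proof (intro conjI ballI impI)
    fix S1 S2 assume "S1 \<in> H W V" "S2 \<in> H W V"
      "\<forall>\<Sigma>\<in>H W V. pairing C ev W (rev C S1) \<Sigma> = pairing C ev W (rev C S2) \<Sigma>"
    thus "eq W V S1 S2" by (rule pair_inj)
  next
    fix \<phi> assume "\<phi> \<in> dual1 C ev W V"
    thus "\<exists>\<Sigma>'\<in>H W V. \<forall>\<Sigma>\<in>H W V. \<phi> \<Sigma> = pairing C ev W (rev C \<Sigma>') \<Sigma>" by (rule SURJ[OF bW bV])
  qed
qed

lemma pv_via_M': assumes M: "propM' C ev" and Y1: "Y1 \<in> H W W" and Y2: "Y2 \<in> H W W" and S: "S \<in> H W W"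
  and h: "\<And>a b. a \<in> H U W \<Longrightarrow> b \<in> H W U \<Longrightarrow> ev (cp b (cp Y1 a)) = ev (cp b (cp Y2 a))"
  shows "pv W S Y1 = pv W S Y2"
proof -
  obtain ps where ps: "\<forall>(a, b)\<in>set ps. a \<in> H U W \<and> b \<in> H W U"
    and e: "eq W W S (ms W W (map (\<lambda>(a, b). cp a b) ps))"
    using M S unfolding propM'_def by blast
  define Sp where "Sp = ms W W (map (\<lambda>(a, b). cp a b) ps)"
  have psin: "set (map (\<lambda>(a, b). cp a b) ps) \<subseteq> H W W" using ps cp_in by fastforce
  have Sp: "Sp \<in> H W W" unfolding Sp_def by (rule ms_in[OF psin])
  have key: "pv W S Y = sum_list (map (\<lambda>(a, b). ev (cp b (cp Y a))) ps)" if Y: "Y \<in> H W W" for Y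
  proof -
    have "pv W S Y = pv W Y S" by (rule pv_swap[OF S Y])
    also have "\<dots> = pv W Y Sp" using eqD[OF e[folded Sp_def] S Sp Y] by simp
    also have "\<dots> = pv W Sp Y" by (rule pv_swap[OF Y Sp])
    also have "\<dots> = sum_list (map (\<lambda>x. pv W x Y) (map (\<lambda>(a, b). cp a b) ps))"
      unfolding Sp_def by (rule pv_msum1[OF Y psin])
    also have "\<dots> = sum_list (map (\<lambda>(a, b). ev (cp b (cp Y a))) ps)"
      unfolding map_map o_def
    proof (rule arg_cong[where f=sum_list], rule map_cong[OF refl])
      fix p assume p: "p \<in> set ps"
      obtain a b where ab: "p = (a, b)" by (cases p)
      have a: "a \<in> H U W" and b: "b \<in> H W U" using ps p ab by auto
      have "pv W (cp a b) Y = ev (tr C W (cp a (cp b Y)))" unfolding pv_def using cp_assoc[OF Y b a] by simp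
      also have "\<dots> = ev (cp b (cp Y a))" using K6[OF a cp_in[OF Y b]] cp_assoc[OF a Y b] by simp
      finally show "(\<lambda>x. pv W x Y) ((\<lambda>(a, b). cp a b) p) = (\<lambda>(a, b). ev (cp b (cp Y a))) p" using ab by simp
    qed
    finally show ?thesis .
  qed
  have "sum_list (map (\<lambda>(a, b). ev (cp b (cp Y1 a))) ps) = sum_list (map (\<lambda>(a, b). ev (cp b (cp Y2 a))) ps)"
  proof (rule arg_cong[where f=sum_list], rule map_cong[OF refl])
    fix p assume p: "p \<in> set ps"
    obtain a b where ab: "p = (a, b)" by (cases p)
    show "(\<lambda>(a, b). ev (cp b (cp Y1 a))) p = (\<lambda>(a, b). ev (cp b (cp Y2 a))) p" using ps p ab h by auto
  qed
  thus ?thesis using key[OF Y1] key[OF Y2] by simp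
qed

definition coefs :: "'o \<Rightarrow> 'm list \<Rightarrow> 'm \<Rightarrow> 'k list" where
  "coefs W bs \<Sigma> = (SOME cs. length cs = length bs \<and> eq U W \<Sigma> (lincomb C U W cs bs))"

lemma FM_A_W: assumes F: "propF C ev" and M: "propM' C ev" shows "\<exists>m. biproduct_of_units1 C ev W m"
proof -
  have fr: "free_finite_rank1 C ev U W" and pb: "pairing_bij C ev U W" using F unfolding propF_def by auto
  obtain bs where bsin: "set bs \<subseteq> H U W"
    and span: "\<forall>\<Sigma>\<in>H U W. \<exists>cs. length cs = length bs \<and> eq U W \<Sigma> (lincomb C U W cs bs)"
    and ind: "\<forall>cs. length cs = length bs \<and> lincomb C U W cs bs \<in> II U W \<longrightarrow> (\<forall>c\<in>set cs. c = 0)"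
    using fr unfolding free_finite_rank1_def by blast
  define m where "m = length bs"
  have bi: "\<And>i. i < m \<Longrightarrow> bs ! i \<in> H U W" using bsin nth_H m_def by blast
  define co' where "co' = coefs W bs"
  have cspec: "length (co' \<Sigma>) = m \<and> eq U W \<Sigma> (lincomb C U W (co' \<Sigma>) bs)" if "\<Sigma> \<in> H U W" for \<Sigma>
    unfolding co'_def coefs_def m_def using someI_ex[OF span[rule_format, OF that]] .
  have uniq: "cs = ds" if "length cs = m" "length ds = m" "\<Sigma> \<in> H U W"
      "eq U W \<Sigma> (lincomb C U W cs bs)" "eq U W \<Sigma> (lincomb C U W ds bs)" for cs ds \<Sigma>
  proof -
    define es where "es = map (\<lambda>i. cs ! i - ds ! i) [0..<m]"
    have les: "length es = length bs" unfolding es_def m_def by simp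
    have "lincomb C U W es bs \<in> II U W"
      unfolding I1_iff
    proof (intro conjI ballI)
      show "lincomb C U W es bs \<in> H U W" by (rule lincomb_in[OF les bsin])
    next
      fix S assume S: "S \<in> H W U"
      have "pv U S (lincomb C U W es bs) = (\<Sum>i<m. (cs ! i - ds ! i) * pv U S (bs ! i))"
        using pv_lincomb[OF les bsin S] unfolding es_def m_def by simp
      also have "\<dots> = (\<Sum>i<m. cs ! i * pv U S (bs ! i)) - (\<Sum>i<m. ds ! i * pv U S (bs ! i))"
        by (simp add: left_diff_distrib sum_subtractf)
      also have "\<dots> = pv U S (lincomb C U W cs bs) - pv U S (lincomb C U W ds bs)"
        using pv_lincomb[OF _ bsin S, of cs] pv_lincomb[OF _ bsin S, of ds] that(1,2) m_def by simp
      also have "\<dots> = 0"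
        using eqD[OF that(4) that(3) lincomb_in[OF _ bsin] S] eqD[OF that(5) that(3) lincomb_in[OF _ bsin] S]
          that(1,2) m_def by simp
      finally show "pv U S (lincomb C U W es bs) = 0" .
    qed
    hence z: "\<forall>c\<in>set es. c = 0" using ind les by blast
    show ?thesis
    proof (rule nth_equalityI)
      show "length cs = length ds" using that by simp
    next
      fix i assume "i < length cs"
      hence i: "i < m" using that by simp
      have "es ! i \<in> set es" using i les m_def by simp
      hence "es ! i = 0" using z by blast
      thus "cs ! i = ds ! i" using i unfolding es_def by simp
    qed
  qed
  have coef_lin: "co' f = cs" if f: "f \<in> H U W" and l: "length cs = m"
    and h: "\<And>S. S \<in> H W U \<Longrightarrow> pv U S f = (\<Sum>k<m. cs ! k * pv U S (bs ! k))" for f cs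
  proof -
    have "eq U W f (lincomb C U W cs bs)"
    proof (rule eqI[OF f lincomb_in[OF _ bsin]])
      show "length cs = length bs" using l m_def by simp
    next
      fix S assume S: "S \<in> H W U"
      show "pv U S f = pv U S (lincomb C U W cs bs)" using h[OF S] pv_lincomb[OF _ bsin S, of cs] l m_def by simp
    qed
    thus ?thesis using uniq[OF _ l f _] cspec[OF f] by blast
  qed
  have coef_pv: "pv U S a = (\<Sum>k<m. co' a ! k * pv U S (bs ! k))" if a: "a \<in> H U W" and S: "S \<in> H W U" for a S
    using eqD[OF cspec[OF a, THEN conjunct2] a lincomb_in[OF _ bsin] S] pv_lincomb[OF _ bsin S] cspec[OF a] m_def
    by simp
  define phi where "phi i = (\<lambda>\<Sigma>. co' \<Sigma> ! i)" for i
  have phid: "phi i \<in> dual1 C ev U W" if i: "i < m" for i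
    unfolding dual1_def
  proof (intro CollectI conjI ballI allI)
    fix f g assume f: "f \<in> H U W" and g: "g \<in> H U W"
    have "co' (ad f g) = map (\<lambda>k. co' f ! k + co' g ! k) [0..<m]"
    proof (rule coef_lin[OF add_in[OF f g]])
      fix S assume S: "S \<in> H W U"
      show "pv U S (ad f g) = (\<Sum>k<m. map (\<lambda>k. co' f ! k + co' g ! k) [0..<m] ! k * pv U S (bs ! k))"
        using pv_add[OF f g S] coef_pv[OF f S] coef_pv[OF g S] by (simp add: distrib_right sum.distrib)
    qed simp
    thus "phi i (ad f g) = phi i f + phi i g" unfolding phi_def using i by simp
  next
    fix a f assume f: "f \<in> H U W"
    have "co' (sm a f) = map (\<lambda>k. a * co' f ! k) [0..<m]"
    proof (rule coef_lin[OF sm_in[OF f]])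
      fix S assume S: "S \<in> H W U"
      show "pv U S (sm a f) = (\<Sum>k<m. map (\<lambda>k. a * co' f ! k) [0..<m] ! k * pv U S (bs ! k))"
        using pv_sm[OF f S] coef_pv[OF f S] by (simp add: sum_distrib_left mult.assoc)
    qed simp
    thus "phi i (sm a f) = a * phi i f" unfolding phi_def using i by simp
  next
    fix f assume fI: "f \<in> II U W"
    have f: "f \<in> H U W" using fI I1_iff by blast
    have "co' f = map (\<lambda>k. 0) [0..<m]"
    proof (rule coef_lin[OF f])
      fix S assume S: "S \<in> H W U"
      show "pv U S f = (\<Sum>k<m. map (\<lambda>k. 0) [0..<m] ! k * pv U S (bs ! k))"
        using I1_pv[OF fI S] by simp
    qed simp
    thus "phi i f = 0" unfolding phi_def using i by simp
  qed
  have surj: "\<forall>\<phi>\<in>dual1 C ev U W. \<exists>\<Sigma>'\<in>H U W. \<forall>\<Sigma>\<in>H U W. \<phi> \<Sigma> = pairing C ev U (rev C \<Sigma>') \<Sigma>"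
    using pb unfolding pairing_bij_def by blast
  define r where "r i = (SOME S'. S' \<in> H U W \<and> (\<forall>\<Sigma>\<in>H U W. phi i \<Sigma> = pairing C ev U (rev C S') \<Sigma>))" for i
  have rspec: "r i \<in> H U W \<and> (\<forall>\<Sigma>\<in>H U W. phi i \<Sigma> = pairing C ev U (rev C (r i)) \<Sigma>)" if "i < m" for i
    unfolding r_def using someI_ex[of "\<lambda>S'. S' \<in> H U W \<and> (\<forall>\<Sigma>\<in>H U W. phi i \<Sigma> = pairing C ev U (rev C S') \<Sigma>)"]
      surj phid[OF that] by blast
  define fI where "fI i = rev C (r i)" for i
  have fIin: "fI i \<in> H W U" if "i < m" for i unfolding fI_def using rev_in rspec[OF that] by blast
  have KEY: "ev (cp (fI i) a) = co' a ! i" if i: "i < m" and a: "a \<in> H U W" for i a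
  proof -
    have "co' a ! i = pairing C ev U (fI i) a" using rspec[OF i] a unfolding phi_def fI_def by blast
    also have "\<dots> = ev (cp (fI i) a)" unfolding pairing_def using tr_U[OF cp_in[OF a fIin[OF i]]] by simp
    finally show ?thesis by simp
  qed
  define T where "T = ms W W (map (\<lambda>i. cp (bs ! i) (fI i)) [0..<m])"
  have Tin_l: "set (map (\<lambda>i. cp (bs ! i) (fI i)) [0..<m]) \<subseteq> H W W"
    using cp_in[OF fIin bi] by auto
  have Tin: "T \<in> H W W" unfolding T_def by (rule ms_in[OF Tin_l])
  have CLAIM: "eq U W (cp T a) a" if a: "a \<in> H U W" for a
  proof (rule eqI[OF cp_in[OF a Tin] a])
    fix S assume S: "S \<in> H W U"
    have l2: "set (map (\<lambda>x. cp x a) (map (\<lambda>i. cp (bs ! i) (fI i)) [0..<m])) \<subseteq> H U W"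
      using Tin_l cp_in[OF a] by auto
    have "pv U S (cp T a) = sum_list (map (pv U S) (map (\<lambda>x. cp x a) (map (\<lambda>i. cp (bs ! i) (fI i)) [0..<m])))"
      unfolding T_def using cp_msum_r[OF a Tin_l] pv_msum[OF S l2] by simp
    also have "\<dots> = (\<Sum>i<m. co' a ! i * pv U S (bs ! i))"
      unfolding map_map o_def sum_list_upt_sum
    proof (rule sum.cong[OF refl])
      fix i assume "i \<in> {..<m}"
      hence i: "i < m" by simp
      have "cp (cp (bs ! i) (fI i)) a = cp (bs ! i) (cp (fI i) a)" using cp_assoc[OF a fIin[OF i] bi[OF i]] by simp
      thus "pv U S (cp (cp (bs ! i) (fI i)) a) = co' a ! i * pv U S (bs ! i)"
        using pv_scal2[OF cp_in[OF a fIin[OF i]] bi[OF i] S] KEY[OF i a] by simp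
    qed
    also have "\<dots> = pv U S a" using coef_pv[OF a S] by simp
    finally show "pv U S (cp T a) = pv U S a" .
  qed
  have "bip W m fI (\<lambda>i. bs ! i)"
    unfolding bip_def
  proof (intro conjI allI impI ballI)
    fix i assume "i < m" thus "fI i \<in> H W U" "bs ! i \<in> H U W" using fIin bi by auto
  next
    fix i j assume ij: "i < m" "j < m"
    have "co' (bs ! j) = map (\<lambda>k. if k = j then 1 else 0) [0..<m]"
    proof (rule coef_lin[OF bi[OF ij(2)]])
      fix S assume S: "S \<in> H W U"
      have "(\<Sum>k<m. map (\<lambda>k. if k = j then 1 else 0) [0..<m] ! k * pv U S (bs ! k)) =
            (\<Sum>k<m. if k = j then pv U S (bs ! k) else 0)"
        by (intro sum.cong refl) auto
      also have "\<dots> = pv U S (bs ! j)" using ij by simp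
      finally show "pv U S (bs ! j) = (\<Sum>k<m. map (\<lambda>k. if k = j then 1 else 0) [0..<m] ! k * pv U S (bs ! k))" by simp
    qed simp
    thus "ev (cp (fI i) (bs ! j)) = (if i = j then 1 else 0)" using KEY[OF ij(1) bi[OF ij(2)]] ij by simp
  next
    fix S assume S: "S \<in> H W W"
    have "pv W S (idm W) = pv W S T"
    proof (rule pv_via_M'[OF M id_in Tin S])
      fix a b assume a: "a \<in> H U W" and b: "b \<in> H W U"
      have "eq U U (cp b (cp T a)) (cp b a)" by (rule eq_cp_l[OF cp_in[OF a Tin] a b CLAIM[OF a]])
      hence "ev (cp b (cp T a)) = ev (cp b a)" using K3 cp_in[OF cp_in[OF a Tin] b] cp_in[OF a b] by blast
      thus "ev (cp b (cp (idm W) a)) = ev (cp b (cp T a))" using cp_id_l[OF a] by simp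
    qed
    also have "\<dots> = (\<Sum>i<m. pv W S (cp (bs ! i) (fI i)))"
      unfolding T_def using pv_msum[OF S Tin_l] by (simp add: o_def sum_list_upt_sum)
    finally show "pv W S (idm W) = (\<Sum>i<m. pv W S (cp (bs ! i) (fI i)))" .
  qed
  thus ?thesis using bip_to by blast
qed

end

theorem mainTheorem8:
  fixes C :: "('o, 'm, 'k::comm_ring_1) lincat"
    and ev :: "'m \<Rightarrow> 'k"
    and \<iota> :: "'k \<Rightarrow> 'k"
  assumes "ring_involution \<iota>"
    and "setting C ev"
    and "multiplicative C ev"
    and "iota_involutive C ev \<iota>"
  shows "(propF C ev \<and> propM' C ev) \<longleftrightarrow> propA C ev"
proof -
  interpret P1 C ev \<iota> using assms by unfold_locales
  show ?thesis using A_F A_M' FM_A_W unfolding propA_def by blast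
qed

end
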